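(* Let $1\leq s\leq\infty$ and $n\geq 2$. Let $\lambda$ be an arc of class $\mathcal{C}^s$ in $\mathbb{R}^n$ and let $\Omega$ be a neighborhood of $\lambda$. Then there is a simple closed curve $\gamma$ of class $\mathcal{C}^s$ in $\mathbb{R}^n$ that contains $\lambda$ and is contained in $\Omega$.
   Context: An arc of class $\mathcal{C}^s$ is the image of an injective $\mathcal{C}^s$ map of a closed interval with nowhere-vanishing derivative; a simple closed curve of class $\mathcal{C}^s$ is the image of an injective $\mathcal{C}^s$ map of the unit circle with nowhere-vanishing derivative. Neighborhoods are open. *)

theory Defs
  imports "HOL-Analysis.Analysis" "HOL-Library.Extended_Nat"
begin

text \<open>k-times continuously differentiable on a set S (derivatives taken within S,
  i.e. one-sided at the endpoints of a closed interval).\<close>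
fun Ck_on :: "nat \<Rightarrow> real set \<Rightarrow> (real \<Rightarrow> 'a::real_normed_vector) \<Rightarrow> bool" where
  "Ck_on 0 S f = continuous_on S f"
| "Ck_on (Suc k) S f =
     (\<exists>f'. (\<forall>t\<in>S. (f has_vector_derivative f' t) (at t within S)) \<and> Ck_on k S f')"

definition Cs_on :: "enat \<Rightarrow> real set \<Rightarrow> (real \<Rightarrow> 'a::real_normed_vector) \<Rightarrow> bool" where
  "Cs_on s S f = (if s = \<infinity> then (\<forall>k. Ck_on k S f) else Ck_on (the_enat s) S f)"

definition arc_Cs :: "enat \<Rightarrow> 'a::real_normed_vector set \<Rightarrow> bool" where
  "arc_Cs s L = (\<exists>a b (c :: real \<Rightarrow> 'a). a < b \<and> Cs_on s {a..b} c \<and> inj_on c {a..b} \<and>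
      (\<forall>t\<in>{a..b}. vector_derivative c (at t within {a..b}) \<noteq> 0) \<and> L = c ` {a..b})"

text \<open>A simple closed curve of class C^s: image of an injective C^s map of the circle
  with nowhere-vanishing derivative; maps of the circle R/Z are represented by their
  1-periodic lifts to R.\<close>
definition simple_closed_curve_Cs :: "enat \<Rightarrow> 'a::real_normed_vector set \<Rightarrow> bool" where
  "simple_closed_curve_Cs s G = (\<exists>g :: real \<Rightarrow> 'a. Cs_on s UNIV g \<and> (\<forall>t. g (t + 1) = g t) \<and>
      inj_on g {0..<1} \<and> (\<forall>t. vector_derivative g (at t) \<noteq> 0) \<and> G = g ` {0..1})"

end

theory Submission
  imports Defs "HOL-Computational_Algebra.Polynomial"
begin

lemma Ck_cont: "Ck_on k S f \<Longrightarrow> continuous_on S f"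
  by (cases k) (auto intro: continuous_on_vector_derivative)

lemma Ck_Suc_mono: "Ck_on (Suc k) S f \<Longrightarrow> Ck_on k S f"
proof (induction k arbitrary: f)
  case 0
  then show ?case using Ck_cont[of "Suc 0" S f] by simp
next
  case (Suc k)
  then obtain f' where "\<forall>t\<in>S. (f has_vector_derivative f' t) (at t within S)" "Ck_on (Suc k) S f'"
    by auto
  then show ?case using Suc.IH by auto
qed

lemma Ck_mono: "j \<le> k \<Longrightarrow> Ck_on k S f \<Longrightarrow> Ck_on j S f"
proof (induction k)
  case 0 then show ?case by simp
next
  case (Suc k)
  then show ?case
    by (metis Ck_Suc_mono le_SucE)
qed

lemma Ck_const: "Ck_on k S (\<lambda>x. c)"
proof (induction k arbitrary: c)
  case 0 then show ?case by simp
next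
  case (Suc k)
  show ?case by (auto intro!: exI[of _ "\<lambda>x. 0"] derivative_eq_intros Suc)
qed

lemma Ck_add: "Ck_on k S f \<Longrightarrow> Ck_on k S g \<Longrightarrow> Ck_on k S (\<lambda>x. f x + g x)"
proof (induction k arbitrary: f g)
  case 0 then show ?case by (auto intro: continuous_on_add)
next
  case (Suc k)
  from Suc.prems obtain f' g' where
    "\<forall>t\<in>S. (f has_vector_derivative f' t) (at t within S)" "Ck_on k S f'"
    "\<forall>t\<in>S. (g has_vector_derivative g' t) (at t within S)" "Ck_on k S g'"
    by auto
  then show ?case
    by (auto intro!: exI[of _ "\<lambda>x. f' x + g' x"] has_vector_derivative_add Suc.IH)
qed

lemma Ck_neg: "Ck_on k S f \<Longrightarrow> Ck_on k S (\<lambda>x. - f x)"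
proof (induction k arbitrary: f)
  case 0 then show ?case by (auto intro: continuous_on_minus)
next
  case (Suc k)
  from Suc.prems obtain f' where
    "\<forall>t\<in>S. (f has_vector_derivative f' t) (at t within S)" "Ck_on k S f'"
    by auto
  then show ?case
    by (auto intro!: exI[of _ "\<lambda>x. - f' x"] has_vector_derivative_minus Suc.IH)
qed

lemma Ck_diff: "Ck_on k S f \<Longrightarrow> Ck_on k S g \<Longrightarrow> Ck_on k S (\<lambda>x. f x - g x)"
  using Ck_add[of k S f "\<lambda>x. - g x"] Ck_neg[of k S g] by simp

lemma Ck_sum: "finite I \<Longrightarrow> (\<And>i. i \<in> I \<Longrightarrow> Ck_on k S (f i)) \<Longrightarrow> Ck_on k S (\<lambda>x. \<Sum>i\<in>I. f i x)"
  by (induction I rule: finite_induct) (auto intro: Ck_add Ck_const)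

lemma Ck_scaleR:
  fixes \<phi> :: "real \<Rightarrow> real"
  shows "Ck_on k S \<phi> \<Longrightarrow> Ck_on k S f \<Longrightarrow> Ck_on k S (\<lambda>x. \<phi> x *\<^sub>R f x)"
proof (induction k arbitrary: \<phi> f)
  case 0 then show ?case by (auto intro: continuous_on_scaleR)
next
  case (Suc k)
  from Suc.prems obtain f' \<phi>' where
    f': "\<forall>t\<in>S. (f has_vector_derivative f' t) (at t within S)" "Ck_on k S f'" and
    p': "\<forall>t\<in>S. (\<phi> has_vector_derivative \<phi>' t) (at t within S)" "Ck_on k S \<phi>'"
    by auto
  have k: "Ck_on k S f" "Ck_on k S \<phi>" using Suc.prems Ck_Suc_mono by blast+
  show ?case
  proof (simp, intro exI[of _ "\<lambda>x. \<phi> x *\<^sub>R f' x + \<phi>' x *\<^sub>R f x"] conjI ballI)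
    fix t assume "t \<in> S"
    then show "((\<lambda>x. \<phi> x *\<^sub>R f x) has_vector_derivative \<phi> t *\<^sub>R f' t + \<phi>' t *\<^sub>R f t) (at t within S)"
      using f' p' by (auto intro!: has_vector_derivative_scaleR simp: has_real_derivative_iff_has_vector_derivative)
  next
    show "Ck_on k S (\<lambda>x. \<phi> x *\<^sub>R f' x + \<phi>' x *\<^sub>R f x)"
      using Suc.IH k f' p' by (auto intro: Ck_add)
  qed
qed

lemma Ck_mult:
  fixes \<phi> \<psi> :: "real \<Rightarrow> real"
  shows "Ck_on k S \<phi> \<Longrightarrow> Ck_on k S \<psi> \<Longrightarrow> Ck_on k S (\<lambda>x. \<phi> x * \<psi> x)"
  using Ck_scaleR[of k S \<phi> \<psi>] by simp

lemma Ck_comp: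
  fixes g :: "real \<Rightarrow> real"
  shows "Ck_on k UNIV f \<Longrightarrow> Ck_on k UNIV g \<Longrightarrow> Ck_on k UNIV (\<lambda>x. f (g x))"
proof (induction k arbitrary: f g)
  case 0 then show ?case
    by (auto intro: continuous_on_compose2[of UNIV f UNIV g])
next
  case (Suc k)
  from Suc.prems obtain f' g' where
    f': "\<forall>t. (f has_vector_derivative f' t) (at t)" "Ck_on k UNIV f'" and
    g': "\<forall>t. (g has_vector_derivative g' t) (at t)" "Ck_on k UNIV g'"
    by auto
  have k: "Ck_on k UNIV f" "Ck_on k UNIV g" using Suc.prems Ck_Suc_mono by blast+
  show ?case
  proof (simp, intro exI[of _ "\<lambda>x. g' x *\<^sub>R f' (g x)"] conjI allI)
    fix t
    show "((\<lambda>x. f (g x)) has_vector_derivative g' t *\<^sub>R f' (g t)) (at t)"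
      using vector_diff_chain_at[of g "g' t" t f "f' (g t)"] f' g' by (simp add: o_def)
  next
    show "Ck_on k UNIV (\<lambda>x. g' x *\<^sub>R f' (g x))"
      using Suc.IH k f' g' by (auto intro: Ck_scaleR)
  qed
qed

lemma Ck_id: "Ck_on k S (\<lambda>x::real. x)"
proof (cases k)
  case 0 then show ?thesis by simp
next
  case (Suc j)
  then show ?thesis
    by (auto intro!: exI[of _ "\<lambda>x. 1"] Ck_const derivative_eq_intros)
qed

lemma Ck_inverse:
  fixes g :: "real \<Rightarrow> real"
  shows "Ck_on k UNIV g \<Longrightarrow> (\<And>x. g x \<noteq> 0) \<Longrightarrow> Ck_on k UNIV (\<lambda>x. inverse (g x))"
proof (induction k arbitrary: g)
  case 0 then show ?case by (auto intro: continuous_on_inverse)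
next
  case (Suc k)
  from Suc.prems obtain g' where
    g': "\<forall>t. (g has_vector_derivative g' t) (at t)" "Ck_on k UNIV g'"
    by auto
  have k: "Ck_on k UNIV g" using Suc.prems Ck_Suc_mono by blast
  have i: "Ck_on k UNIV (\<lambda>x. inverse (g x))" using Suc.IH[OF k] Suc.prems by blast
  show ?case
  proof (simp, intro exI[of _ "\<lambda>x. - (g' x * (inverse (g x) * inverse (g x)))"] conjI allI)
    fix t
    have "(g has_real_derivative g' t) (at t)" using g'
      by (simp add: has_real_derivative_iff_has_vector_derivative)
    then have "((\<lambda>x. inverse (g x)) has_real_derivative - (g' t * (inverse (g t) * inverse (g t)))) (at t)"
      using Suc.prems(2)[of t]
      by (auto intro!: derivative_eq_intros simp: power2_eq_square field_simps)
    then show "((\<lambda>x. inverse (g x)) has_vector_derivative - (g' t * (inverse (g t) * inverse (g t)))) (at t)"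
      by (simp add: has_real_derivative_iff_has_vector_derivative)
  next
    show "Ck_on k UNIV (\<lambda>x. - (g' x * (inverse (g x) * inverse (g x))))"
      using g' i by (intro Ck_neg Ck_mult) auto
  qed
qed

lemma tower_Ck:
  assumes "\<And>i x. i < k \<Longrightarrow> (D i has_vector_derivative D (Suc i) x) (at x)"
    and "continuous_on UNIV (D k)"
  shows "Ck_on k UNIV (D 0)"
  using assms
proof (induction k arbitrary: D)
  case 0 then show ?case by simp
next
  case (Suc k)
  have "Ck_on k UNIV ((\<lambda>i. D (Suc i)) 0)"
    by (rule Suc.IH) (use Suc.prems in auto)
  then show ?case using Suc.prems(1)[of 0] by auto
qed

lemma tower_smooth:
  assumes "\<And>i x. (D i has_vector_derivative D (Suc i) x) (at x)"
  shows "Ck_on k UNIV (D 0)"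
proof (rule tower_Ck)
  show "continuous_on UNIV (D k)"
    using assms[of k] by (auto intro: continuous_on_vector_derivative has_vector_derivative_at_within)
qed (use assms in auto)

lemma Cs_on_iff: "Cs_on s S f \<longleftrightarrow> (\<forall>k. enat k \<le> s \<longrightarrow> Ck_on k S f)"
proof (cases s)
  case (enat n)
  then show ?thesis
    by (auto simp: Cs_on_def intro: Ck_mono)
next
  case infinity
  then show ?thesis by (auto simp: Cs_on_def)
qed


lemma poly_exp_at_top: "((\<lambda>z::real. poly q z * exp (- z)) \<longlongrightarrow> 0) at_top"
proof -
  have "((\<lambda>z::real. \<Sum>i\<le>degree q. coeff q i * (z ^ i / exp z)) \<longlongrightarrow> (\<Sum>i\<le>degree q. coeff q i * 0)) at_top"
    by (intro tendsto_sum tendsto_mult tendsto_const tendsto_power_div_exp_0)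
  moreover have "(\<Sum>i\<le>degree q. coeff q i * (z ^ i / exp z)) = poly q z * exp (- z)" for z :: real
    by (simp add: poly_altdef sum_distrib_right exp_minus divide_inverse mult.assoc)
  ultimately show ?thesis by simp
qed

lemma poly_exp_at_right0: "((\<lambda>x::real. poly q (inverse x) * exp (- inverse x)) \<longlongrightarrow> 0) (at_right 0)"
  using filterlim_compose[OF poly_exp_at_top filterlim_inverse_at_top_right] by (simp add: o_def)

definition bet :: "real \<Rightarrow> real" where
  "bet x = (if x > 0 then exp (- inverse x) else 0)"

primrec betp :: "nat \<Rightarrow> real poly" where
  "betp 0 = 1"
| "betp (Suc k) = [:0,0,1:] * (betp k - pderiv (betp k))"

definition betD :: "nat \<Rightarrow> real \<Rightarrow> real" where
  "betD k x = (if x > 0 then poly (betp k) (inverse x) * exp (- inverse x) else 0)"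

lemma betD_0: "betD 0 = bet"
  by (auto simp: betD_def bet_def fun_eq_iff)

lemma betD_deriv: "(betD k has_real_derivative betD (Suc k) x) (at x)"
proof (cases "x > 0")
  case True
  have d1: "((\<lambda>x. inverse x) has_real_derivative -(inverse x ^ 2)) (at x)"
    using True by (auto intro!: derivative_eq_intros simp: power2_eq_square)
  have d2: "((\<lambda>x. poly (betp k) (inverse x)) has_real_derivative poly (pderiv (betp k)) (inverse x) * (-(inverse x ^ 2))) (at x)"
    by (rule DERIV_chain2[OF poly_DERIV d1])
  have d3: "((\<lambda>x. exp (- inverse x)) has_real_derivative exp (- inverse x) * (inverse x ^ 2)) (at x)"
    using DERIV_chain2[OF DERIV_exp DERIV_minus[OF d1]] by simp
  have "((\<lambda>x. poly (betp k) (inverse x) * exp (- inverse x)) has_real_derivative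
          poly (betp (Suc k)) (inverse x) * exp (- inverse x)) (at x)"
    by (rule DERIV_cong[OF DERIV_mult[OF d2 d3]]) (simp add: algebra_simps power2_eq_square)
  then have "(betD k has_real_derivative poly (betp (Suc k)) (inverse x) * exp (- inverse x)) (at x)"
    by (rule has_field_derivative_transform_within_open[where S="{0<..}"]) (use True in \<open>auto simp: betD_def\<close>)
  then show ?thesis using True by (simp add: betD_def)
next
  case False
  show ?thesis
  proof (cases "x < 0")
    case True
    have "((\<lambda>x. 0) has_real_derivative 0) (at x)" by simp
    then have "(betD k has_real_derivative 0) (at x)"
      by (rule has_field_derivative_transform_within_open[where S="{..<0}"]) (use True in \<open>auto simp: betD_def\<close>)
    then show ?thesis using True by (simp add: betD_def)
  next
    case False
    with \<open>\<not> x > 0\<close> have x: "x = 0" by simp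
    have "((\<lambda>y. (betD k y - betD k 0) / (y - 0)) \<longlongrightarrow> 0) (at 0)"
      unfolding filterlim_at_split
    proof
      show "((\<lambda>y. (betD k y - betD k 0) / (y - 0)) \<longlongrightarrow> 0) (at_left 0)"
        by (rule tendsto_eventually) (auto simp: betD_def eventually_at_left_field intro!: exI[of _ "-1"])
    next
      have "((\<lambda>y. poly ([:0,1:] * betp k) (inverse y) * exp (- inverse y)) \<longlongrightarrow> 0) (at_right 0)"
        by (rule poly_exp_at_right0)
      moreover have "\<forall>\<^sub>F y in at_right 0. poly ([:0,1:] * betp k) (inverse y) * exp (- inverse y)
           = (betD k y - betD k 0) / (y - 0)"
        by (auto simp: betD_def eventually_at_right_field divide_inverse intro!: exI[of _ 1])
      ultimately show "((\<lambda>y. (betD k y - betD k 0) / (y - 0)) \<longlongrightarrow> 0) (at_right 0)"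
        by (rule Lim_transform_eventually)
    qed
    then show ?thesis using x by (simp add: has_field_derivative_iff betD_def)
  qed
qed

lemma bet_smooth: "Ck_on k UNIV bet"
  using tower_smooth[of betD k] betD_deriv betD_0
  by (simp add: has_real_derivative_iff_has_vector_derivative)

lemma bet_nonpos: "x \<le> 0 \<Longrightarrow> bet x = 0"
  by (simp add: bet_def)

lemma bet_pos: "x > 0 \<Longrightarrow> bet x > 0"
  by (simp add: bet_def)

lemma bet_nonneg: "bet x \<ge> 0"
  by (simp add: bet_def)

lemma bet_strict_mono: "0 \<le> x \<Longrightarrow> x < y \<Longrightarrow> bet x < bet y"
  by (cases "x = 0") (auto simp: bet_def)

lemma bet_deriv_pos: "x > 0 \<Longrightarrow> (bet has_real_derivative exp (- inverse x) / x\<^sup>2) (at x)"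
proof -
  assume x: "x > 0"
  have d1: "((\<lambda>x. inverse x) has_real_derivative -(inverse x ^ 2)) (at x)"
    using x by (auto intro!: derivative_eq_intros simp: power2_eq_square)
  have "((\<lambda>x. exp (- inverse x)) has_real_derivative exp (- inverse x) * (inverse x ^ 2)) (at x)"
    using DERIV_chain2[OF DERIV_exp DERIV_minus[OF d1]] by simp
  then have "((\<lambda>x. exp (- inverse x)) has_real_derivative exp (- inverse x) / x\<^sup>2) (at x)"
    by (simp add: power_inverse divide_inverse)
  then show ?thesis
    by (rule has_field_derivative_transform_within_open[where S="{0<..}"]) (use x in \<open>auto simp: bet_def\<close>)
qed

lemma sincos_smooth: "Ck_on k UNIV (\<lambda>x. A * sin (w * x) + B * cos (w * x))"
proof (induction k arbitrary: A B)
  case 0 then show ?case by (auto intro!: continuous_intros)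
next
  case (Suc k)
  have "((\<lambda>x. A * sin (w * x) + B * cos (w * x)) has_real_derivative
         (- (B * w)) * sin (w * t) + (A * w) * cos (w * t)) (at t)" for t
    by (auto intro!: derivative_eq_intros simp: algebra_simps)
  then show ?case using Suc.IH
    by (auto simp: has_real_derivative_iff_has_vector_derivative
        intro!: exI[of _ "\<lambda>t. (- (B * w)) * sin (w * t) + (A * w) * cos (w * t)"])
qed

lemma sin_smooth: "Ck_on k UNIV (\<lambda>x. sin (w * x))"
  using sincos_smooth[of k 1 w 0] by simp

lemma cos_smooth: "Ck_on k UNIV (\<lambda>x. cos (w * x))"
  using sincos_smooth[of k 0 w 1] by simp

definition sstep :: "real \<Rightarrow> real" where
  "sstep x = bet x / (bet x + bet (1 - x))"

lemma sstep_den_pos: "bet x + bet (1 - x) > 0"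
  by (cases "x > 0") (auto simp: bet_def add_pos_nonneg add_nonneg_pos)

lemma sstep_smooth: "Ck_on k UNIV sstep"
proof -
  have b1: "Ck_on k UNIV (\<lambda>x. bet (1 - x))"
    by (intro Ck_comp[OF bet_smooth] Ck_diff Ck_const Ck_id)
  have "Ck_on k UNIV (\<lambda>x. bet x * inverse (bet x + bet (1 - x)))"
    using sstep_den_pos
    by (intro Ck_mult bet_smooth Ck_inverse Ck_add b1) (auto simp: less_le)
  then show ?thesis by (simp add: sstep_def[abs_def] divide_inverse)
qed

lemma sstep_0: "x \<le> 0 \<Longrightarrow> sstep x = 0"
  by (simp add: sstep_def bet_def)

lemma sstep_1: "x \<ge> 1 \<Longrightarrow> sstep x = 1"
  using sstep_den_pos[of x] by (simp add: sstep_def bet_nonpos)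

lemma sstep_range: "0 \<le> sstep x \<and> sstep x \<le> 1"
  using sstep_den_pos[of x] bet_nonneg[of x] bet_nonneg[of "1-x"]
  by (auto simp: sstep_def divide_le_eq_1)

definition bump :: "real \<Rightarrow> real" where
  "bump x = sstep ((4 - 4 * x\<^sup>2) / 3)"

lemma bump_smooth: "Ck_on k UNIV bump"
proof -
  have "Ck_on k UNIV (\<lambda>x. (4 - 4 * (x * x)) * (1/3) :: real)"
    by (intro Ck_mult Ck_diff Ck_const Ck_id)
  then have "Ck_on k UNIV (\<lambda>x. sstep ((4 - 4 * (x * x)) * (1/3)))"
    by (intro Ck_comp[OF sstep_smooth])
  then show ?thesis by (simp add: bump_def[abs_def] power2_eq_square)
qed

lemma bump_1: "\<bar>x\<bar> \<le> 1/2 \<Longrightarrow> bump x = 1"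
proof -
  assume "\<bar>x\<bar> \<le> 1/2"
  then have "\<bar>x\<bar> * \<bar>x\<bar> \<le> (1/2) * (1/2)" by (intro mult_mono) auto
  then have "x\<^sup>2 \<le> (1/2)\<^sup>2" by (simp add: power2_eq_square)
  then show ?thesis by (intro sstep_1[of "(4 - 4 * x\<^sup>2) / 3", folded bump_def]) (simp add: power2_eq_square)
qed

lemma bump_0: "\<bar>x\<bar> \<ge> 1 \<Longrightarrow> bump x = 0"
proof -
  assume "\<bar>x\<bar> \<ge> 1"
  then have "1 * 1 \<le> \<bar>x\<bar> * \<bar>x\<bar>" by (intro mult_mono) auto
  then have "x\<^sup>2 \<ge> 1" by (simp add: power2_eq_square)
  then show ?thesis unfolding bump_def by (intro sstep_0) simp
qed


primrec nd :: "nat \<Rightarrow> (real \<Rightarrow> 'a::real_normed_vector) \<Rightarrow> real \<Rightarrow> 'a" where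
  "nd 0 f = f"
| "nd (Suc i) f = (\<lambda>x. vector_derivative (nd i f) (at x))"

lemma Ck_nd: "Ck_on k UNIV f \<Longrightarrow> i \<le> k \<Longrightarrow> Ck_on (k - i) UNIV (nd i f)"
proof (induction i)
  case 0 then show ?case by simp
next
  case (Suc i)
  moreover have "k - i = Suc (k - Suc i)" using Suc.prems by simp
  ultimately have "Ck_on (Suc (k - Suc i)) UNIV (nd i f)"
    by simp
  then obtain f' where f': "\<forall>t. (nd i f has_vector_derivative f' t) (at t)" "Ck_on (k - Suc i) UNIV f'"
    by auto
  then have "nd (Suc i) f = f'" by (auto simp: fun_eq_iff intro: vector_derivative_at)
  then show ?case using f' by simp
qed

lemma Ck_nd_deriv:
  assumes "Ck_on k UNIV f" "i < k"
  shows "(nd i f has_vector_derivative nd (Suc i) f x) (at x)"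
proof -
  have "Ck_on (Suc (k - Suc i)) UNIV (nd i f)"
    using Ck_nd[OF assms(1), of i] assms(2) by (simp add: Suc_diff_Suc)
  then obtain f' where f': "\<forall>t. (nd i f has_vector_derivative f' t) (at t)"
    by auto
  then have "vector_derivative (nd i f) (at x) = f' x" using vector_derivative_at by blast
  then show ?thesis using f' by simp
qed

lemma smooth_nd_deriv:
  assumes "\<And>k. Ck_on k UNIV f"
  shows "(nd i f has_vector_derivative nd (Suc i) f x) (at x)"
  using Ck_nd_deriv[OF assms[of "Suc i"]] by simp

lemma tower_nd:
  assumes "\<And>i x. (D i has_vector_derivative D (Suc i) x) (at x)"
  shows "nd i (D 0) = D i"
proof (induction i)
  case 0 then show ?case by simp
next
  case (Suc i)
  have "nd (Suc i) (D 0) = (\<lambda>x. vector_derivative (D i) (at x))" using Suc.IH by simp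
  then show ?case using assms by (simp add: fun_eq_iff vector_derivative_at)
qed

lemma nd_local:
  assumes "\<And>k. Ck_on k UNIV f" "open U" "\<And>x. x \<in> U \<Longrightarrow> f x = g x" "x \<in> U"
  shows "nd i f x = nd i g x"
  using assms(4)
proof (induction i arbitrary: x)
  case 0 then show ?case using assms(3) by simp
next
  case (Suc i)
  have "(nd i g has_vector_derivative nd (Suc i) f x) (at x)"
    by (rule has_vector_derivative_transform_within_open[OF smooth_nd_deriv[OF assms(1)] assms(2) Suc.prems])
      (use Suc.IH in auto)
  then show ?case by (simp add: vector_derivative_at)
qed

definition monoD :: "nat \<Rightarrow> nat \<Rightarrow> real \<Rightarrow> real" where
  "monoD j i y = (if i \<le> j then y ^ (j - i) / fact (j - i) else 0)"

lemma monoD_deriv: "(monoD j i has_real_derivative monoD j (Suc i) y) (at y)"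
proof (cases "i < j")
  case True
  define d where "d = j - Suc i"
  have d: "j - i = Suc d" "j - Suc i = d" using True by (auto simp: d_def)
  have "((\<lambda>y. y ^ Suc d) has_real_derivative real (Suc d) * y ^ d) (at y)"
    using DERIV_pow[of "Suc d" y] by simp
  then have "((\<lambda>y. y ^ Suc d / fact (Suc d)) has_real_derivative real (Suc d) * y ^ d / fact (Suc d)) (at y)"
    by (rule DERIV_cdivide)
  moreover have "real (Suc d) * y ^ d / fact (Suc d) = y ^ d / fact d"
    by (simp add: fact_Suc del: of_nat_Suc)
  ultimately have "((\<lambda>y. y ^ Suc d / fact (Suc d)) has_real_derivative y ^ d / fact d) (at y)"
    by simp
  then show ?thesis using True d by (simp add: monoD_def[abs_def])
next
  case False
  then show ?thesis
    by (cases "i = j") (auto simp: monoD_def[abs_def])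
qed

lemma monoD_smooth: "Ck_on k UNIV (\<lambda>y. y ^ j / fact j :: real)"
proof -
  have "Ck_on k UNIV (monoD j 0)"
    using tower_smooth[of "monoD j" k] monoD_deriv
    by (simp add: has_real_derivative_iff_has_vector_derivative)
  then show ?thesis by (simp add: monoD_def[abs_def])
qed

lemma nd_mono: "nd i (\<lambda>y. y ^ j / fact j :: real) = monoD j i"
proof -
  have "nd i (monoD j 0) = monoD j i"
    by (rule tower_nd) (simp add: monoD_deriv flip: has_real_derivative_iff_has_vector_derivative)
  then show ?thesis by (simp add: monoD_def[abs_def])
qed

lemma nd_zero: "nd i (\<lambda>y. 0 :: 'a::real_normed_vector) = (\<lambda>y. 0)"
  by (induction i) auto

definition Pj :: "nat \<Rightarrow> real \<Rightarrow> real" where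
  "Pj j y = y ^ j / fact j * bump y"

lemma Pj_smooth: "Ck_on k UNIV (Pj j)"
  unfolding Pj_def[abs_def] by (intro Ck_mult monoD_smooth bump_smooth)

lemma Pj_nd_0: "nd i (Pj j) 0 = (if i = j then 1 else 0)"
proof -
  have "nd i (Pj j) 0 = nd i (\<lambda>y. y ^ j / fact j :: real) 0"
    by (rule nd_local[where U="{-1/2<..<1/2}"]) (auto intro: Pj_smooth simp: Pj_def bump_1)
  then show ?thesis by (simp add: nd_mono monoD_def)
qed

lemma Pj_nd_out: "1 < \<bar>y\<bar> \<Longrightarrow> nd i (Pj j) y = 0"
proof -
  assume y: "1 < \<bar>y\<bar>"
  have "open {y::real. 1 < \<bar>y\<bar>}"
    by (intro open_Collect_less continuous_intros)
  then have "nd i (Pj j) y = nd i (\<lambda>y. 0 :: real) y"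
    by (rule nd_local[OF Pj_smooth]) (use y in \<open>auto simp: Pj_def bump_0\<close>)
  then show ?thesis by (simp add: nd_zero)
qed

lemma Pj_nd_bounded: "\<exists>B\<ge>0. \<forall>y. \<bar>nd i (Pj j) y\<bar> \<le> B"
proof -
  have d: "\<And>x. (nd i (Pj j) has_vector_derivative nd (Suc i) (Pj j) x) (at x)"
    by (rule smooth_nd_deriv[OF Pj_smooth])
  have "continuous_on UNIV (nd i (Pj j))"
    by (intro continuous_at_imp_continuous_on ballI has_vector_derivative_continuous[OF d])
  then have "compact (nd i (Pj j) ` {-1..1})"
    by (auto intro: compact_continuous_image continuous_on_subset)
  then obtain B where B: "\<forall>z\<in>nd i (Pj j) ` {-1..1}. norm z \<le> B"
    using compact_imp_bounded bounded_iff by metis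
  show ?thesis
  proof (intro exI[of _ "max B 0"] conjI allI)
    fix y :: real
    show "\<bar>nd i (Pj j) y\<bar> \<le> max B 0"
    proof (cases "\<bar>y\<bar> \<le> 1")
      case True
      then have "y \<in> {-1..1}" by auto
      then have "norm (nd i (Pj j) y) \<le> B" using B by blast
      then show ?thesis by simp
    next
      case False then show ?thesis using Pj_nd_out[of y i j] by simp
    qed
  qed simp
qed

lemma borel_scalar:
  fixes m :: "nat \<Rightarrow> real"
  shows "\<exists>H. (\<forall>i x. (H i has_real_derivative H (Suc i) x) (at x)) \<and> (\<forall>i. H i 0 = m i)"
proof -
  define B where "B j i = (SOME B. B \<ge> 0 \<and> (\<forall>y. \<bar>nd i (Pj j) y\<bar> \<le> B))" for j i
  have B0: "B j i \<ge> 0 \<and> (\<forall>y. \<bar>nd i (Pj j) y\<bar> \<le> B j i)" for j i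
    unfolding B_def by (rule someI_ex) (use Pj_nd_bounded in blast)
  have B: "\<And>j i y. \<bar>nd i (Pj j) y\<bar> \<le> B j i" "\<And>j i. B j i \<ge> 0"
    using B0 by auto
  define eps where "eps j = min 1 (1 / ((1 + \<bar>m j\<bar>) * (1 + (\<Sum>i<j. B j i)) * 2 ^ j))" for j
  have den_pos: "(1 + \<bar>m j\<bar>) * (1 + (\<Sum>i<j. B j i)) * 2 ^ j > 0" for j
    using B(2) by (intro mult_pos_pos add_pos_nonneg sum_nonneg) auto
  have eps_pos: "eps j > 0" for j using den_pos[of j] by (simp add: eps_def)
  have eps_le1: "eps j \<le> 1" for j by (simp add: eps_def)
  have key: "\<bar>m j\<bar> * eps j ^ (j - i) * B j i \<le> (1/2) ^ j" if "i < j" for i j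
  proof -
    have "eps j ^ (j - i) \<le> eps j"
      using eps_pos[of j] eps_le1[of j] that
      using power_decreasing[of 1 "j - i" "eps j"] by simp
    then have "\<bar>m j\<bar> * eps j ^ (j - i) * B j i \<le> \<bar>m j\<bar> * eps j * B j i"
      using B(2) by (intro mult_right_mono mult_left_mono) auto
    also have "\<dots> \<le> (1 + \<bar>m j\<bar>) * (1 + (\<Sum>i<j. B j i)) * eps j"
    proof -
      have "B j i \<le> (\<Sum>i<j. B j i)"
        using that B(2) by (intro member_le_sum) auto
      then have "\<bar>m j\<bar> * B j i \<le> (1 + \<bar>m j\<bar>) * (1 + (\<Sum>i<j. B j i))"
        using B(2) by (intro mult_mono) auto
      then show ?thesis using eps_pos[of j]
        using mult_right_mono[of "\<bar>m j\<bar> * B j i" _ "eps j"] by (simp add: mult_ac)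
    qed
    also have "\<dots> \<le> (1 + \<bar>m j\<bar>) * (1 + (\<Sum>i<j. B j i)) * (1 / ((1 + \<bar>m j\<bar>) * (1 + (\<Sum>i<j. B j i)) * 2 ^ j))"
      using den_pos[of j] B(2)
      by (intro mult_left_mono) (auto simp: eps_def intro!: mult_nonneg_nonneg add_nonneg_nonneg sum_nonneg)
    also have "\<dots> = (1/2) ^ j"
      using den_pos[of j] by (simp add: field_simps)
    finally show ?thesis .
  qed
  define T where "T i j x = m j * (eps j ^ j / eps j ^ i) * nd i (Pj j) (x / eps j)" for i j x
  have Tder: "(T i j has_real_derivative T (Suc i) j x) (at x)" for i j x
  proof -
    have "(nd i (Pj j) has_real_derivative nd (Suc i) (Pj j) (x / eps j)) (at (x / eps j))"
      using smooth_nd_deriv[OF Pj_smooth] by (simp add: has_real_derivative_iff_has_vector_derivative)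
    moreover have d1: "((\<lambda>x. x / eps j) has_real_derivative 1 / eps j) (at x)"
      using eps_pos[of j] by (auto intro!: derivative_eq_intros)
    ultimately have "((\<lambda>x. nd i (Pj j) (x / eps j)) has_real_derivative nd (Suc i) (Pj j) (x / eps j) * (1 / eps j)) (at x)"
      by (rule DERIV_chain2[where g="\<lambda>x. x / eps j"])
    then have "(T i j has_real_derivative (m j * (eps j ^ j / eps j ^ i)) * (nd (Suc i) (Pj j) (x / eps j) * (1 / eps j))) (at x)"
      unfolding T_def[abs_def] by (intro DERIV_cmult)
    then show ?thesis
      using eps_pos[of j] by (simp add: T_def field_simps)
  qed
  have Tbound: "\<bar>T i j x\<bar> \<le> (1/2) ^ j" if "i < j" for i j x
  proof -
    have "eps j ^ j / eps j ^ i = eps j ^ (j - i)"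
      using eps_pos[of j] that by (simp add: power_diff)
    then have "\<bar>T i j x\<bar> = \<bar>m j\<bar> * eps j ^ (j - i) * \<bar>nd i (Pj j) (x / eps j)\<bar>"
      using eps_pos[of j] by (simp add: T_def abs_mult)
    also have "\<dots> \<le> \<bar>m j\<bar> * eps j ^ (j - i) * B j i"
      using B(1) eps_pos[of j] by (intro mult_left_mono) auto
    also have "\<dots> \<le> (1/2) ^ j" using key[OF that] .
    finally show ?thesis .
  qed
  have summ: "summable (\<lambda>j. T i j x)" for i x
    by (rule summable_comparison_test'[of "\<lambda>j. (1/2::real) ^ j" "Suc i"])
       (use Tbound in \<open>auto intro: summable_geometric\<close>)
  have uc: "uniformly_convergent_on UNIV (\<lambda>n x. \<Sum>j<n. T i j x)" for i
  proof (rule Weierstrass_m_test'_ev[where M="\<lambda>j. (1/2::real) ^ j"])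
    show "\<forall>\<^sub>F n in sequentially. \<forall>x\<in>UNIV. norm (T i n x) \<le> (1 / 2) ^ n"
      unfolding eventually_sequentially
      by (intro exI[of _ "Suc i"]) (auto intro!: Tbound)
  qed (auto intro: summable_geometric)
  define H where "H i x = (\<Sum>j. T i j x)" for i x
  have "(H i has_real_derivative H (Suc i) x) (at x)" for i x
    unfolding H_def[abs_def]
    by (rule has_field_derivative_series'(2)[of UNIV "T i" "T (Suc i)" 0])
       (auto intro: Tder uc summ)
  moreover have "H i 0 = m i" for i
  proof -
    have "T i j 0 = (if j = i then m i else 0)" for j
      using eps_pos[of i] by (auto simp: T_def Pj_nd_0)
    then have "(\<lambda>j. T i j 0) sums m i"
      using sums_single[of i "\<lambda>_. m i"] by simp
    then show ?thesis by (simp add: H_def sums_iff)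
  qed
  ultimately show ?thesis by blast
qed

lemma borel_vec:
  fixes m :: "nat \<Rightarrow> 'a::euclidean_space"
  shows "\<exists>H. (\<forall>i x. (H i has_vector_derivative H (Suc i) x) (at x)) \<and> (\<forall>i. H i 0 = m i)"
proof -
  have "\<exists>H. (\<forall>i x. (H i has_real_derivative H (Suc i) x) (at x)) \<and> (\<forall>i. H i 0 = inner (m i) b)" for b
    using borel_scalar[of "\<lambda>i. inner (m i) b"] by simp
  then have "\<forall>b. \<exists>H. (\<forall>i x. (H i has_real_derivative H (Suc i) x) (at x)) \<and> (\<forall>i. H i 0 = inner (m i) b)"
    by blast
  then obtain Hb where Hb: "\<And>b i x. (Hb b i has_real_derivative Hb b (Suc i) x) (at x)"
    "\<And>b i. Hb b i 0 = inner (m i) b"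
    by metis
  define H where "H i x = (\<Sum>b\<in>Basis. Hb b i x *\<^sub>R b)" for i x
  have "(H i has_vector_derivative H (Suc i) x) (at x)" for i x
    unfolding H_def[abs_def]
    by (intro has_vector_derivative_sum has_vector_derivative_scaleR[of _ _ _ _ "\<lambda>_. _" 0, simplified]
        Hb derivative_intros)
  moreover have "H i 0 = m i" for i
    by (simp add: H_def Hb(2) euclidean_representation)
  ultimately show ?thesis by blast
qed


primrec ndw :: "real set \<Rightarrow> nat \<Rightarrow> (real \<Rightarrow> 'a::real_normed_vector) \<Rightarrow> real \<Rightarrow> 'a" where
  "ndw S 0 f = f"
| "ndw S (Suc i) f = (\<lambda>x. vector_derivative (ndw S i f) (at x within S))"

lemma vd_within_cong:
  assumes "x \<in> S" "\<And>y. y \<in> S \<Longrightarrow> f y = g y"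
  shows "vector_derivative f (at x within S) = vector_derivative g (at x within S)"
proof -
  have "(f has_vector_derivative v) (at x within S) \<longleftrightarrow> (g has_vector_derivative v) (at x within S)" for v
    using assms has_vector_derivative_transform[of x S f g v] has_vector_derivative_transform[of x S g f v]
    by metis
  then show ?thesis unfolding vector_derivative_def by simp
qed

lemma ndw_cong:
  assumes "\<And>y. y \<in> S \<Longrightarrow> f y = g y" "x \<in> S"
  shows "ndw S i f x = ndw S i g x"
  using assms(2)
proof (induction i arbitrary: x)
  case 0 then show ?case using assms(1) by simp
next
  case (Suc i)
  then show ?case using vd_within_cong[OF Suc.prems Suc.IH] by simp
qed

lemma Ck_ndw:
  fixes f :: "real \<Rightarrow> 'a::real_normed_vector"
  assumes "a < b"
  shows "Ck_on k {a..b} f \<Longrightarrow>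
    (\<forall>i<k. \<forall>t\<in>{a..b}. (ndw {a..b} i f has_vector_derivative ndw {a..b} (Suc i) f t) (at t within {a..b}))
    \<and> continuous_on {a..b} (ndw {a..b} k f)"
proof (induction k arbitrary: f)
  case 0 then show ?case by simp
next
  case (Suc k)
  let ?S = "{a..b}"
  from Suc.prems obtain f' where f': "\<forall>t\<in>?S. (f has_vector_derivative f' t) (at t within ?S)" "Ck_on k ?S f'"
    by auto
  note IH = Suc.IH[OF f'(2)]
  have eq: "ndw ?S (Suc i) f t = ndw ?S i f' t" if "t \<in> ?S" for i t
    using that
  proof (induction i arbitrary: t)
    case 0
    then show ?case using f'(1) assms
      by (simp add: vector_derivative_within_cbox[of a b t f "f' t", simplified])
  next
    case (Suc i)
    have "ndw ?S (Suc (Suc i)) f t = vector_derivative (ndw ?S (Suc i) f) (at t within ?S)" by simp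
    also have "\<dots> = vector_derivative (ndw ?S i f') (at t within ?S)"
      by (rule vd_within_cong[OF Suc.prems]) (use Suc.IH in auto)
    finally show ?case by simp
  qed
  show ?case
  proof (intro conjI allI impI ballI)
    fix i t assume i: "i < Suc k" and t: "t \<in> ?S"
    show "(ndw ?S i f has_vector_derivative ndw ?S (Suc i) f t) (at t within ?S)"
    proof (cases i)
      case 0
      then show ?thesis using f'(1) t eq[of t 0] by simp
    next
      case (Suc j)
      with i have j: "j < k" by simp
      have d0: "(ndw ?S j f' has_vector_derivative ndw ?S (Suc j) f' t) (at t within ?S)"
        using IH j t by blast
      have "(ndw ?S (Suc j) f has_vector_derivative ndw ?S (Suc j) f' t) (at t within ?S)"
        by (rule has_vector_derivative_transform[where g="ndw ?S (Suc j) f", OF t _ d0]) (use eq in auto)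
      then show ?thesis using Suc eq[OF t, of "Suc j"] by simp
    qed
  next
    show "continuous_on ?S (ndw ?S (Suc k) f)"
      using IH continuous_on_cong[of ?S ?S "ndw ?S (Suc k) f" "ndw ?S k f'"] eq by blast
  qed
qed

lemma hvd_Un:
  assumes "(f has_vector_derivative v) (at x within S)" "(f has_vector_derivative v) (at x within T)"
  shows "(f has_vector_derivative v) (at x within S \<union> T)"
  using assms unfolding has_vector_derivative_def has_derivative_within Lim_within_Un by simp

lemma hvd_shift:
  assumes "\<And>y. (H i has_vector_derivative H (Suc i) y) (at y)"
  shows "((\<lambda>x. H i (x - b)) has_vector_derivative H (Suc i) (x - b)) (at x)"
proof -
  have "((\<lambda>x. x - b) has_vector_derivative 1) (at x)"
    by (auto intro!: derivative_eq_intros)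
  from vector_diff_chain_at[OF this assms[of "x - b"]] show ?thesis by (simp add: o_def)
qed

lemma extension_exists:
  fixes c :: "real \<Rightarrow> 'a::euclidean_space"
  assumes ab: "a < b"
  shows "\<exists>D. (\<forall>i. \<forall>t\<in>{a..b}. D i t = ndw {a..b} i c t) \<and>
    (\<forall>k. Ck_on k {a..b} c \<longrightarrow> (\<forall>i<k. \<forall>x. (D i has_vector_derivative D (Suc i) x) (at x))
       \<and> continuous_on UNIV (D k))"
proof -
  let ?S = "{a..b}"
  obtain HR where HR: "\<And>i x. (HR i has_vector_derivative HR (Suc i) x) (at x)" "\<And>i. HR i 0 = ndw ?S i c b"
    using borel_vec[of "\<lambda>i. ndw ?S i c b"] by blast
  obtain HL where HL: "\<And>i x. (HL i has_vector_derivative HL (Suc i) x) (at x)" "\<And>i. HL i 0 = ndw ?S i c a"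
    using borel_vec[of "\<lambda>i. ndw ?S i c a"] by blast
  define D where "D i x = (if x < a then HL i (x - a) else if x \<le> b then ndw ?S i c x else HR i (x - b))" for i x
  have DS: "D i x = ndw ?S i c x" if "x \<in> ?S" for i x using that by (auto simp: D_def)
  have DR: "D i x = HR i (x - b)" if "x \<in> {b..}" for i x
    using that ab HR(2)[of i] by (auto simp: D_def)
  have DL: "D i x = HL i (x - a)" if "x \<in> {..a}" for i x
    using that ab HL(2)[of i] by (auto simp: D_def)
  have R: "(D i has_vector_derivative D (Suc i) x) (at x within {b..})" if "x \<in> {b..}" for i x
  proof -
    have d0: "((\<lambda>x. HR i (x - b)) has_vector_derivative HR (Suc i) (x - b)) (at x within {b..})"
      using hvd_shift[of HR i b x] HR(1) has_vector_derivative_at_within by blast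
    have "(D i has_vector_derivative HR (Suc i) (x - b)) (at x within {b..})"
      by (rule has_vector_derivative_transform[where g="D i", OF that _ d0]) (use DR in auto)
    then show ?thesis using DR[OF that, of "Suc i"] by simp
  qed
  have L: "(D i has_vector_derivative D (Suc i) x) (at x within {..a})" if "x \<in> {..a}" for i x
  proof -
    have d0: "((\<lambda>x. HL i (x - a)) has_vector_derivative HL (Suc i) (x - a)) (at x within {..a})"
      using hvd_shift[of HL i a x] HL(1) has_vector_derivative_at_within by blast
    have "(D i has_vector_derivative HL (Suc i) (x - a)) (at x within {..a})"
      by (rule has_vector_derivative_transform[where g="D i", OF that _ d0]) (use DL in auto)
    then show ?thesis using DL[OF that, of "Suc i"] by simp
  qed
  have main: "(\<forall>i<k. \<forall>x. (D i has_vector_derivative D (Suc i) x) (at x)) \<and> continuous_on UNIV (D k)"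
    if ck: "Ck_on k ?S c" for k
  proof -
    note cw = Ck_ndw[OF ab that]
    have M: "(D i has_vector_derivative D (Suc i) x) (at x within ?S)" if "i < k" "x \<in> ?S" for i x
    proof -
      have d0: "(ndw ?S i c has_vector_derivative ndw ?S (Suc i) c x) (at x within ?S)"
        using cw that by blast
      have "(D i has_vector_derivative ndw ?S (Suc i) c x) (at x within ?S)"
        by (rule has_vector_derivative_transform[where g="D i", OF that(2) _ d0]) (use DS in auto)
      then show ?thesis using DS[OF that(2), of "Suc i"] by simp
    qed
    have der: "(D i has_vector_derivative D (Suc i) x) (at x)" if i: "i < k" for i x
    proof -
      consider "x < a" | "x = a" | "a < x \<and> x < b" | "x = b" | "x > b" by linarith
      then show ?thesis
      proof cases
        case 1
        have "(D i has_vector_derivative D (Suc i) x) (at x within {..a})" using L 1 by simp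
        moreover have "at x within {..a} = at x"
          by (rule at_within_interior) (use 1 in simp)
        ultimately show ?thesis by simp
      next
        case 2
        have "(D i has_vector_derivative D (Suc i) x) (at x within {..a} \<union> ?S)"
          using hvd_Un[OF L M] 2 i ab by simp
        moreover have "{..a} \<union> ?S = {..b}" using ab by auto
        moreover have "at x within {..b} = at x"
          by (rule at_within_interior) (use 2 ab in simp)
        ultimately show ?thesis by simp
      next
        case 3
        have "(D i has_vector_derivative D (Suc i) x) (at x within ?S)" using M i 3 by simp
        moreover have "at x within ?S = at x"
          by (rule at_within_interior) (use 3 in simp)
        ultimately show ?thesis by simp
      next
        case 4
        have "(D i has_vector_derivative D (Suc i) x) (at x within ?S \<union> {b..})"
          using hvd_Un[OF M R] 4 i ab by simp
        moreover have "?S \<union> {b..} = {a..}" using ab by auto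
        moreover have "at x within {a..} = at x"
          by (rule at_within_interior) (use 4 ab in simp)
        ultimately show ?thesis by simp
      next
        case 5
        have "(D i has_vector_derivative D (Suc i) x) (at x within {b..})" using R 5 by simp
        moreover have "at x within {b..} = at x"
          by (rule at_within_interior) (use 5 in simp)
        ultimately show ?thesis by simp
      qed
    qed
    have cont: "continuous_on UNIV (D k)"
    proof -
      have c1: "continuous_on ?S (D k)"
        using cw continuous_on_cong[of ?S ?S "D k" "ndw ?S k c"] DS by blast
      have c2: "continuous_on {b..} (D k)"
        using R[of _ k] by (intro continuous_on_vector_derivative) auto
      have c3: "continuous_on {..a} (D k)"
        using L[of _ k] by (intro continuous_on_vector_derivative) auto
      have "continuous_on ({..a} \<union> ?S \<union> {b..}) (D k)"
        by (intro continuous_on_closed_Un c1 c2 c3) auto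
      moreover have "{..a} \<union> ?S \<union> {b..} = UNIV" by auto
      ultimately show ?thesis by simp
    qed
    show ?thesis using der cont by blast
  qed
  show ?thesis using DS main by blast
qed


lemma unit_orth:
  fixes e :: "'a::euclidean_space"
  assumes "2 \<le> DIM('a)"
  obtains w where "norm w = 1" "inner w e = 0"
proof -
  obtain y where y: "y \<noteq> 0" "orthogonal e y"
    using orthogonal_to_vector_exists[OF assms] by blast
  show thesis
    by (rule that[of "y /\<^sub>R norm y"]) (use y in \<open>auto simp: orthogonal_def inner_commute\<close>)
qed

lemma proj_step:
  fixes w e' e :: "'a::euclidean_space"
  assumes w: "norm w = 1" "inner w e = 0" and e: "norm e' = 1" "norm (e' - e) \<le> 1/4"
  defines "p \<equiv> w - inner w e' *\<^sub>R e'"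
  shows "norm (p /\<^sub>R norm p) = 1" "inner (p /\<^sub>R norm p) e' = 0" "inner w (p /\<^sub>R norm p) \<ge> 3/4"
proof -
  have we: "\<bar>inner w e'\<bar> \<le> 1/4"
  proof -
    have "inner w e' = inner w (e' - e)" using w by (simp add: inner_diff_right)
    also have "\<bar>\<dots>\<bar> \<le> norm w * norm (e' - e)" by (rule Cauchy_Schwarz_ineq2)
    finally show ?thesis using w e by simp
  qed
  have "norm (inner w e' *\<^sub>R e') \<le> 1/4" using we e by simp
  then have np: "norm p \<ge> 3/4"
    using norm_triangle_ineq2[of w "inner w e' *\<^sub>R e'"] w unfolding p_def by simp
  have pe: "inner p e' = 0"
    using e by (simp add: p_def inner_diff_left power2_norm_eq_inner[symmetric])
  have "norm p \<noteq> 0" using np by linarith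
  then show "norm (p /\<^sub>R norm p) = 1" by simp
  show "inner (p /\<^sub>R norm p) e' = 0" using pe by simp
  have "inner w p = inner p p"
  proof -
    have "w = p + inner w e' *\<^sub>R e'" by (simp add: p_def)
    then have "inner w p = inner (p + inner w e' *\<^sub>R e') p" by simp
    also have "\<dots> = inner p p + inner w e' * inner e' p" by (simp add: inner_add_left)
    also have "\<dots> = inner p p" using pe by (simp add: inner_commute)
    finally show ?thesis .
  qed
  moreover have "norm p \<noteq> 0" using np by linarith
  ultimately have "inner w (p /\<^sub>R norm p) = norm p"
    by (simp add: power2_norm_eq_inner[symmetric] power2_eq_square)
  then show "inner w (p /\<^sub>R norm p) \<ge> 3/4" using np by simp
qed

lemma normal_field:
  fixes e :: "real \<Rightarrow> 'a::euclidean_space"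
  assumes ab: "a < b" and ec: "continuous_on {a..b} e" and enz: "\<And>t. t \<in> {a..b} \<Longrightarrow> e t \<noteq> 0"
    and dim: "2 \<le> DIM('a)"
  shows "\<exists>u. (\<forall>k. Ck_on k UNIV u) \<and>
    (\<forall>t\<in>{a..b}. \<forall>\<alpha> \<beta>. \<alpha> *\<^sub>R e t + \<beta> *\<^sub>R u t = 0 \<longrightarrow> \<alpha> = 0 \<and> \<beta> = 0)"
proof -
  let ?S = "{a..b}"
  define eh where "eh t = e t /\<^sub>R norm (e t)" for t
  have ehn: "norm (eh t) = 1" if "t \<in> ?S" for t using enz[OF that] by (simp add: eh_def)
  have "continuous_on ?S eh"
    unfolding eh_def using ec enz by (intro continuous_intros) auto
  then have "uniformly_continuous_on ?S eh"
    by (intro compact_uniformly_continuous) auto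
  then obtain r where r: "r > 0" "\<And>t t'. t \<in> ?S \<Longrightarrow> t' \<in> ?S \<Longrightarrow> dist t' t < r \<Longrightarrow> dist (eh t') (eh t) < 1/4"
    unfolding uniformly_continuous_on_def by (meson zero_less_divide_1_iff zero_less_numeral)
  obtain N :: nat where N: "(b - a) / r < N"
    using reals_Archimedean2 by blast
  have Npos: "N > 0" using N ab r
    by (metis divide_pos_pos gr0I less_asym of_nat_0 diff_gt_0_iff_gt)
  define h where "h = (b - a) / N"
  have hpos: "h > 0" using ab Npos by (simp add: h_def)
  have hr: "h < r" using N r ab Npos by (simp add: h_def field_simps)
  define tk where "tk k = min b (a + real k * h)" for k
  have tkS: "tk k \<in> ?S" for k using ab hpos by (auto simp: tk_def)
  define ek where "ek k = eh (tk k)" for k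
  have ekn: "norm (ek k) = 1" for k using ehn tkS by (simp add: ek_def)
  have close: "norm (eh t - ek k) \<le> 1/4" if "t \<in> ?S" "\<bar>t - tk k\<bar> \<le> h" for t k
  proof -
    have "dist (eh t) (eh (tk k)) < 1/4"
      using r(2)[OF tkS that(1)] that(2) hr by (simp add: dist_real_def)
    then show ?thesis by (simp add: ek_def dist_norm)
  qed
  have tkstep: "\<bar>tk (Suc k) - tk k\<bar> \<le> h" for k
    using hpos by (auto simp: tk_def algebra_simps min_def)
  have ekstep: "norm (ek (Suc k) - ek k) \<le> 1/4" for k
    using close[OF tkS, of "Suc k" k] tkstep[of k] by (simp add: ek_def)
  obtain w0 where w0: "norm w0 = 1" "inner w0 (ek 0) = 0"
    using unit_orth[OF dim] by blast
  define nxt where "nxt w e' = (let p = w - inner w e' *\<^sub>R e' in p /\<^sub>R norm p)" for w e' :: 'a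
  define w where "w = rec_nat w0 (\<lambda>k v. nxt v (ek (Suc k)))"
  have w_0: "w 0 = w0" and w_Suc: "w (Suc k) = nxt (w k) (ek (Suc k))" for k
    by (simp_all add: w_def)
  have winv: "norm (w k) = 1 \<and> inner (w k) (ek k) = 0" for k
  proof (induction k)
    case 0 then show ?case using w0 w_0 by simp
  next
    case (Suc k)
    then show ?case
      using proj_step(1,2)[of "w k" "ek k" "ek (Suc k)"] ekn ekstep
      by (simp add: w_Suc nxt_def Let_def)
  qed
  have wstep: "inner (w k) (w (Suc k)) \<ge> 3/4" for k
    using proj_step(3)[of "w k" "ek k" "ek (Suc k)"] winv[of k] ekn ekstep
    by (simp add: w_Suc nxt_def Let_def)
  have wclose: "\<bar>inner (w k) (eh t)\<bar> \<le> 1/4" if "t \<in> ?S" "\<bar>t - tk k\<bar> \<le> h" for t k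
  proof -
    have "inner (w k) (eh t) = inner (w k) (eh t - ek k)"
      using winv[of k] by (simp add: inner_diff_right)
    also have "\<bar>\<dots>\<bar> \<le> norm (w k) * norm (eh t - ek k)" by (rule Cauchy_Schwarz_ineq2)
    finally show ?thesis using winv[of k] close[OF that] by simp
  qed
  define psi where "psi k t = sstep ((t - a) / h - real k + 1) - sstep ((t - a) / h - real k)" for k t
  define u where "u t = (\<Sum>k\<le>Suc N. psi k t *\<^sub>R w k)" for t
  have usmooth: "Ck_on k UNIV u" for k
  proof -
    have aff: "Ck_on k UNIV (\<lambda>t. sstep ((1/h) * t + \<beta>))" for \<beta>
      by (intro Ck_comp[OF sstep_smooth] Ck_add Ck_mult Ck_const Ck_id)
    have e1: "(t - a) / h - real j + 1 = (1/h) * t + (1 - real j - a/h)" for t j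
      using hpos by (simp add: field_simps)
    have e2: "(t - a) / h - real j = (1/h) * t + (- real j - a/h)" for t j
      using hpos by (simp add: field_simps)
    have "Ck_on k UNIV (psi j)" for j
      apply (unfold psi_def[abs_def] e1)
      apply (unfold e2)
      by (intro Ck_diff aff)
    then show ?thesis
      unfolding u_def[abs_def] by (intro Ck_sum Ck_scaleR Ck_const) auto
  qed
  have indep: "\<alpha> = 0 \<and> \<beta> = 0" if t: "t \<in> ?S" and eq: "\<alpha> *\<^sub>R e t + \<beta> *\<^sub>R u t = 0" for t \<alpha> \<beta>
  proof -
    define x where "x = (t - a) / h"
    have x0: "x \<ge> 0" using t hpos by (simp add: x_def)
    have xN: "x \<le> N" using t hpos Npos by (simp add: x_def h_def field_simps)
    define k0 where "k0 = nat \<lfloor>x\<rfloor>"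
    have k0x: "real k0 \<le> x" "x < real k0 + 1"
      using x0 by (simp_all add: k0_def)
    have k0N: "k0 \<le> N" using k0x xN by linarith
    define \<sigma> where "\<sigma> = sstep (x - real k0)"
    have \<sigma>01: "0 \<le> \<sigma>" "\<sigma> \<le> 1" using sstep_range by (auto simp: \<sigma>_def)
    have psi_k0: "psi k0 t = 1 - \<sigma>"
      using k0x by (simp add: psi_def \<sigma>_def x_def[symmetric] sstep_1)
    have psi_k1: "psi (Suc k0) t = \<sigma>"
      using k0x by (simp add: psi_def \<sigma>_def x_def[symmetric] sstep_0 algebra_simps)
    have psi_other: "psi k t = 0" if "k \<noteq> k0" "k \<noteq> Suc k0" for k
    proof (cases "k < k0")
      case True
      then have "real k + 1 \<le> real k0" by linarith
      then show ?thesis using k0x by (simp add: psi_def x_def[symmetric] sstep_1)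
    next
      case False
      with that have "real k \<ge> real k0 + 2" by linarith
      then show ?thesis using k0x by (simp add: psi_def x_def[symmetric] sstep_0)
    qed
    have u_eq: "u t = (1 - \<sigma>) *\<^sub>R w k0 + \<sigma> *\<^sub>R w (Suc k0)"
    proof -
      have "u t = (\<Sum>k\<in>{k0, Suc k0}. psi k t *\<^sub>R w k)"
        unfolding u_def
        by (rule sum.mono_neutral_right) (use k0N psi_other in auto)
      then show ?thesis using psi_k0 psi_k1 by simp
    qed
    have tk0: "\<bar>t - tk k0\<bar> \<le> h"
      using k0x hpos t by (auto simp: tk_def x_def field_simps min_def)
    have tk1: "\<bar>t - tk (Suc k0)\<bar> \<le> h"
      using k0x hpos t by (auto simp: tk_def x_def field_simps min_def)
    have uw: "inner (u t) (w k0) \<ge> 3/4"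
    proof -
      have ww: "inner (w k0) (w k0) = 1"
        using winv[of k0] by (simp add: power2_norm_eq_inner[symmetric])
      have "inner (u t) (w k0) = (1 - \<sigma>) * inner (w k0) (w k0) + \<sigma> * inner (w (Suc k0)) (w k0)"
        by (simp add: u_eq inner_add_left)
      then have "inner (u t) (w k0) = (1 - \<sigma>) + \<sigma> * inner (w k0) (w (Suc k0))"
        using ww by (simp add: inner_commute)
      moreover have "\<sigma> * inner (w k0) (w (Suc k0)) \<ge> \<sigma> * (3/4)"
        using wstep[of k0] \<sigma>01 by (intro mult_left_mono) auto
      ultimately show ?thesis using \<sigma>01 by simp
    qed
    have ue: "\<bar>inner (u t) (eh t)\<bar> \<le> 1/4"
    proof -
      have "inner (u t) (eh t) = (1 - \<sigma>) * inner (w k0) (eh t) + \<sigma> * inner (w (Suc k0)) (eh t)"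
        by (simp add: u_eq inner_add_left)
      then have "\<bar>inner (u t) (eh t)\<bar> \<le> \<bar>(1 - \<sigma>) * inner (w k0) (eh t)\<bar> + \<bar>\<sigma> * inner (w (Suc k0)) (eh t)\<bar>"
        by (simp only: abs_triangle_ineq)
      also have "\<dots> = (1 - \<sigma>) * \<bar>inner (w k0) (eh t)\<bar> + \<sigma> * \<bar>inner (w (Suc k0)) (eh t)\<bar>"
        using \<sigma>01 by (simp add: abs_mult)
      also have "\<dots> \<le> (1 - \<sigma>) * (1/4) + \<sigma> * (1/4)"
        using \<sigma>01 wclose[OF t tk0] wclose[OF t tk1] by (intro add_mono mult_left_mono) auto
      also have "\<dots> = 1/4" by (simp add: field_simps)
      finally show ?thesis .
    qed
    show ?thesis
    proof (cases "\<beta> = 0")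
      case True
      then show ?thesis using eq enz[OF t] by simp
    next
      case False
      define lam where "lam = - (\<alpha> / \<beta>) * norm (e t)"
      have bu: "\<beta> *\<^sub>R u t = - (\<alpha> *\<^sub>R e t)"
        using eq by (simp add: eq_neg_iff_add_eq_0 add.commute)
      have "u t = (1 / \<beta>) *\<^sub>R (\<beta> *\<^sub>R u t)" using False by simp
      also have "\<dots> = - (\<alpha> / \<beta>) *\<^sub>R e t" by (simp add: bu)
      finally have "u t = - (\<alpha> / \<beta>) *\<^sub>R e t" .
      then have ul: "u t = lam *\<^sub>R eh t" using enz[OF t] by (simp add: lam_def eh_def)
      then have "inner (u t) (eh t) = lam" using ehn[OF t] by (simp add: power2_norm_eq_inner[symmetric])
      with ue have l: "\<bar>lam\<bar> \<le> 1/4" by simp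
      have "\<bar>inner (u t) (w k0)\<bar> = \<bar>lam\<bar> * \<bar>inner (w k0) (eh t)\<bar>"
        by (simp add: ul abs_mult inner_commute)
      also have "\<dots> \<le> (1/4) * (1/4)"
        using l wclose[OF t tk0] by (intro mult_mono) auto
      finally show ?thesis using uw by simp
    qed
  qed
  show ?thesis using usmooth indep by blast
qed


lemma mvb:
  fixes f :: "real \<Rightarrow> 'a::real_normed_vector"
  assumes "convex S" "\<And>x. x \<in> S \<Longrightarrow> (f has_vector_derivative f' x) (at x within S)"
    "\<And>x. x \<in> S \<Longrightarrow> norm (f' x) \<le> B" "x \<in> S" "y \<in> S"
  shows "norm (f x - f y) \<le> B * \<bar>x - y\<bar>"
proof -
  have "norm (f x - f y) \<le> B * norm (x - y)"
  proof (rule differentiable_bound[OF assms(1) _ _ assms(4,5)])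
    show "(f has_derivative (\<lambda>h. h *\<^sub>R f' z)) (at z within S)" if "z \<in> S" for z
      using assms(2)[OF that] by (simp add: has_vector_derivative_def)
    show "onorm (\<lambda>h. h *\<^sub>R f' z) \<le> B" if "z \<in> S" for z
      using onorm_scaleR_left_lemma[of "\<lambda>h::real. h" "f' z"] onorm_id[where 'a=real] assms(3)[OF that]
      by (simp add: bounded_linear_ident)
  qed
  then show ?thesis by simp
qed

lemma pair_bounded_below:
  fixes p q :: "'a::euclidean_space"
  assumes ind: "\<And>\<alpha> \<beta>. \<alpha> *\<^sub>R p + \<beta> *\<^sub>R q = 0 \<Longrightarrow> \<alpha> = 0 \<and> \<beta> = 0"
  obtains m where "m > 0" "\<And>\<alpha> \<beta>. m * (\<bar>\<alpha>\<bar> + \<bar>\<beta>\<bar>) \<le> norm (\<alpha> *\<^sub>R p + \<beta> *\<^sub>R q)"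
proof -
  define L where "L z = fst z *\<^sub>R p + snd z *\<^sub>R q" for z :: "real \<times> real"
  have lin: "linear L"
    unfolding L_def by (intro linearI) (auto simp: algebra_simps)
  have "inj L"
  proof (rule injI)
    fix z1 z2 assume "L z1 = L z2"
    then have "(fst z1 - fst z2) *\<^sub>R p + (snd z1 - snd z2) *\<^sub>R q = 0"
      by (simp add: L_def algebra_simps)
    then show "z1 = z2" using ind[of "fst z1 - fst z2" "snd z1 - snd z2"] by (auto simp: prod_eq_iff)
  qed
  then obtain B where B: "B > 0" "\<And>z. B * norm z \<le> norm (L z)"
    using linear_inj_bounded_below_pos[OF lin] by blast
  show thesis
  proof (rule that[of "B / 2"])
    show "B / 2 > 0" using B by simp
    fix \<alpha> \<beta> :: real
    have "\<bar>\<alpha>\<bar> \<le> norm (\<alpha>, \<beta>)" "\<bar>\<beta>\<bar> \<le> norm (\<alpha>, \<beta>)"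
      by (simp_all add: norm_Pair real_le_rsqrt)
    then have "\<bar>\<alpha>\<bar> + \<bar>\<beta>\<bar> \<le> 2 * norm (\<alpha>, \<beta>)" by linarith
    then have "B / 2 * (\<bar>\<alpha>\<bar> + \<bar>\<beta>\<bar>) \<le> B / 2 * (2 * norm (\<alpha>, \<beta>))"
      using B(1) by (intro mult_left_mono) auto
    then have "B / 2 * (\<bar>\<alpha>\<bar> + \<bar>\<beta>\<bar>) \<le> B * norm (\<alpha>, \<beta>)" by simp
    also have "\<dots> \<le> norm (\<alpha> *\<^sub>R p + \<beta> *\<^sub>R q)" using B(2)[of "(\<alpha>, \<beta>)"] by (simp add: L_def)
    finally show "B / 2 * (\<bar>\<alpha>\<bar> + \<bar>\<beta>\<bar>) \<le> norm (\<alpha> *\<^sub>R p + \<beta> *\<^sub>R q)" .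
  qed
qed

lemma tube_locinj:
  fixes E E' u u' :: "real \<Rightarrow> 'a::euclidean_space"
  assumes dE: "\<And>t. (E has_vector_derivative E' t) (at t)" and cE: "continuous_on UNIV E'"
    and du: "\<And>t. (u has_vector_derivative u' t) (at t)" and cu: "continuous_on UNIV u'"
    and ind: "\<And>\<alpha> \<beta>. \<alpha> *\<^sub>R E' t0 + \<beta> *\<^sub>R u t0 = 0 \<Longrightarrow> \<alpha> = 0 \<and> \<beta> = 0"
  shows "\<exists>r>0. \<forall>t1 s1 t2 s2. \<bar>t1 - t0\<bar> < r \<and> \<bar>s1\<bar> < r \<and> \<bar>t2 - t0\<bar> < r \<and> \<bar>s2\<bar> < r \<and>
           E t1 + s1 *\<^sub>R u t1 = E t2 + s2 *\<^sub>R u t2 \<longrightarrow> t1 = t2 \<and> s1 = s2"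
proof -
  let ?p = "E' t0" and ?q = "u t0"
  obtain m where m: "m > 0" "\<And>\<alpha> \<beta>. m * (\<bar>\<alpha>\<bar> + \<bar>\<beta>\<bar>) \<le> norm (\<alpha> *\<^sub>R ?p + \<beta> *\<^sub>R ?q)"
    using pair_bounded_below[OF ind] by blast
  have "isCont E' t0" using cE by (simp add: continuous_on_eq_continuous_at)
  then obtain r1 where r1: "r1 > 0" "\<And>t. \<bar>t - t0\<bar> < r1 \<Longrightarrow> norm (E' t - ?p) < m / 4"
    unfolding continuous_at_eps_delta using m(1) by (metis dist_norm dist_real_def zero_less_divide_iff zero_less_numeral)
  have "isCont u t0" using du has_vector_derivative_continuous by blast
  then obtain r2 where r2: "r2 > 0" "\<And>t. \<bar>t - t0\<bar> < r2 \<Longrightarrow> norm (u t - ?q) < m / 4"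
    unfolding continuous_at_eps_delta using m(1) by (metis dist_norm dist_real_def zero_less_divide_iff zero_less_numeral)
  have "isCont u' t0" using cu by (simp add: continuous_on_eq_continuous_at)
  then obtain r3 where r3: "r3 > 0" "\<And>t. \<bar>t - t0\<bar> < r3 \<Longrightarrow> norm (u' t - u' t0) < 1"
    unfolding continuous_at_eps_delta by (metis dist_norm dist_real_def zero_less_one)
  define U where "U = norm (u' t0) + 1"
  have U1: "U > 0" by (simp add: U_def add_nonneg_pos)
  have U2: "norm (u' t) \<le> U" if "\<bar>t - t0\<bar> < r3" for t
    using r3(2)[OF that] norm_triangle_ineq2[of "u' t" "u' t0"] by (simp add: U_def)
  note U = U1 U2
  define r where "r = min (min r1 r2) (min r3 (m / (4 * U)))"
  have rpos: "r > 0" using r1 r2 r3 m U by (simp add: r_def)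
  have rU: "r * U \<le> m / 4"
  proof -
    have "r \<le> m / (4 * U)" by (simp add: r_def)
    then have "r * U \<le> m / (4 * U) * U" by (rule mult_right_mono) (use U in auto)
    also have "\<dots> = m / 4" using U by simp
    finally show ?thesis .
  qed
  show ?thesis
  proof (intro exI[of _ r] conjI allI impI rpos)
    fix t1 s1 t2 s2
    assume H: "\<bar>t1 - t0\<bar> < r \<and> \<bar>s1\<bar> < r \<and> \<bar>t2 - t0\<bar> < r \<and> \<bar>s2\<bar> < r \<and>
           E t1 + s1 *\<^sub>R u t1 = E t2 + s2 *\<^sub>R u t2"
    define B where "B = ball t0 r"
    have t1B: "t1 \<in> B" and t2B: "t2 \<in> B" using H by (auto simp: B_def dist_real_def abs_minus_commute)
    have Br: "\<bar>t - t0\<bar> < r" if "t \<in> B" for t using that by (auto simp: B_def dist_real_def abs_minus_commute)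
    have R1: "norm ((E t1 - t1 *\<^sub>R ?p) - (E t2 - t2 *\<^sub>R ?p)) \<le> m / 4 * \<bar>t1 - t2\<bar>"
    proof (rule mvb[of B _ "\<lambda>t. E' t - ?p"])
      show "convex B" by (simp add: B_def)
      show "((\<lambda>t. E t - t *\<^sub>R ?p) has_vector_derivative E' x - ?p) (at x within B)" for x
      proof -
        have "((\<lambda>t. t *\<^sub>R ?p) has_derivative (\<lambda>h. h *\<^sub>R ?p)) (at x within B)"
          by (intro bounded_linear_imp_has_derivative bounded_linear_scaleR_left)
        then have "((\<lambda>t. t *\<^sub>R ?p) has_vector_derivative ?p) (at x within B)"
          by (simp add: has_vector_derivative_def)
        then show ?thesis
          by (intro has_vector_derivative_diff has_vector_derivative_at_within[OF dE])
      qed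
      show "norm (E' x - ?p) \<le> m / 4" if "x \<in> B" for x
        using r1(2)[of x] Br[OF that] by (simp add: r_def)
    qed (use t1B t2B in auto)
    have R2: "norm (u t1 - u t2) \<le> U * \<bar>t1 - t2\<bar>"
    proof (rule mvb[of B _ u'])
      show "convex B" by (simp add: B_def)
      show "(u has_vector_derivative u' x) (at x within B)" for x
        using du[of x] by (auto intro: has_vector_derivative_at_within)
      show "norm (u' x) \<le> U" if "x \<in> B" for x
        using U(2)[of x] Br[OF that] by (simp add: r_def)
    qed (use t1B t2B in auto)
    have R3: "norm (u t2 - ?q) \<le> m / 4" using r2(2)[of t2] H by (simp add: r_def)
    define dt where "dt = t1 - t2"
    define ds where "ds = s1 - s2"
    have key: "dt *\<^sub>R ?p + ds *\<^sub>R ?q =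
        - (((E t1 - t1 *\<^sub>R ?p) - (E t2 - t2 *\<^sub>R ?p)) + s1 *\<^sub>R (u t1 - u t2) + ds *\<^sub>R (u t2 - ?q))"
    proof -
      have "E t1 - E t2 = s2 *\<^sub>R u t2 - s1 *\<^sub>R u t1" using H by (simp add: algebra_simps)
      then show ?thesis by (simp add: dt_def ds_def algebra_simps)
    qed
    have "m * (\<bar>dt\<bar> + \<bar>ds\<bar>) \<le> norm (dt *\<^sub>R ?p + ds *\<^sub>R ?q)" by (rule m(2))
    also have "\<dots> \<le> norm ((E t1 - t1 *\<^sub>R ?p) - (E t2 - t2 *\<^sub>R ?p)) + norm (s1 *\<^sub>R (u t1 - u t2)) + norm (ds *\<^sub>R (u t2 - ?q))"
      unfolding key norm_minus_cancel by (rule norm_triangle_le) (rule add_mono norm_triangle_ineq order_refl)+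
    also have "\<dots> \<le> m / 4 * \<bar>dt\<bar> + m / 4 * \<bar>dt\<bar> + m / 4 * \<bar>ds\<bar>"
    proof (intro add_mono)
      show "norm ((E t1 - t1 *\<^sub>R ?p) - (E t2 - t2 *\<^sub>R ?p)) \<le> m / 4 * \<bar>dt\<bar>" using R1 by (simp add: dt_def)
      have "norm (s1 *\<^sub>R (u t1 - u t2)) = \<bar>s1\<bar> * norm (u t1 - u t2)" by simp
      also have "\<dots> \<le> r * (U * \<bar>dt\<bar>)"
        using H R2 by (intro mult_mono) (auto simp: dt_def)
      also have "\<dots> = (r * U) * \<bar>dt\<bar>" by simp
      also have "\<dots> \<le> m / 4 * \<bar>dt\<bar>" using rU by (intro mult_right_mono) auto
      finally show "norm (s1 *\<^sub>R (u t1 - u t2)) \<le> m / 4 * \<bar>dt\<bar>" .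
      have "norm (ds *\<^sub>R (u t2 - ?q)) = \<bar>ds\<bar> * norm (u t2 - ?q)" by simp
      also have "\<dots> \<le> \<bar>ds\<bar> * (m / 4)" using R3 by (intro mult_left_mono) auto
      finally show "norm (ds *\<^sub>R (u t2 - ?q)) \<le> m / 4 * \<bar>ds\<bar>" by (simp add: mult.commute)
    qed
    finally have "m * (\<bar>dt\<bar> + \<bar>ds\<bar>) \<le> m / 2 * \<bar>dt\<bar> + m / 4 * \<bar>ds\<bar>" by simp
    moreover have "m / 2 * \<bar>dt\<bar> = (m * \<bar>dt\<bar>) / 2" "m / 4 * \<bar>ds\<bar> = (m * \<bar>ds\<bar>) / 4"
      "m * (\<bar>dt\<bar> + \<bar>ds\<bar>) = m * \<bar>dt\<bar> + m * \<bar>ds\<bar>" by (simp_all add: algebra_simps)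
    moreover have "m * \<bar>dt\<bar> \<ge> 0" "m * \<bar>ds\<bar> \<ge> 0" using m(1) by simp_all
    ultimately have "m * \<bar>dt\<bar> = 0" "m * \<bar>ds\<bar> = 0" by linarith+
    then show "t1 = t2" "s1 = s2" using m(1) by (simp_all add: dt_def ds_def)
  qed
qed

lemma inj_nbhd_compact:
  fixes F :: "'a::metric_space \<Rightarrow> 'b::metric_space"
  assumes K: "compact K" and Fc: "continuous_on UNIV F" and injK: "inj_on F K"
    and loc: "\<And>x. x \<in> K \<Longrightarrow> \<exists>r>0. inj_on F (ball x r)"
  shows "\<exists>\<delta>>0. inj_on F {y. \<exists>x\<in>K. dist x y < \<delta>}"
proof (rule ccontr)
  assume "\<not> ?thesis"
  then have "\<forall>n::nat. \<exists>y z kz ky. ky \<in> K \<and> kz \<in> K \<and> dist ky y < 1 / (Suc n) \<and> dist kz z < 1 / (Suc n) \<and> y \<noteq> z \<and> F y = F z"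
    unfolding inj_on_def by (auto simp del: of_nat_Suc) (metis of_nat_0_less_iff zero_less_Suc divide_pos_pos zero_less_one)
  then obtain y z kz ky where S: "\<And>n. ky n \<in> K \<and> kz n \<in> K \<and> dist (ky n) (y n) < 1 / (Suc n) \<and> dist (kz n) (z n) < 1 / (Suc n) \<and> y n \<noteq> z n \<and> F (y n) = F (z n)"
    by metis
  have sc: "seq_compact (K \<times> K)" using K by (intro compact_imp_seq_compact compact_Times)
  have allK: "\<forall>n. (ky n, kz n) \<in> K \<times> K" using S by auto
  obtain l \<phi> where l: "l \<in> K \<times> K" "strict_mono \<phi>" "((\<lambda>n. (ky n, kz n)) \<circ> \<phi>) \<longlonglongrightarrow> l"
    using seq_compactE[OF sc allK] by blast
  obtain p q where pq: "l = (p, q)" by (cases l)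
  have kyl: "(\<lambda>n. ky (\<phi> n)) \<longlonglongrightarrow> p" and kzl: "(\<lambda>n. kz (\<phi> n)) \<longlonglongrightarrow> q"
    using tendsto_fst[OF l(3)] tendsto_snd[OF l(3)] pq by (simp_all add: o_def)
  have d0: "(\<lambda>n. 1 / real (Suc (\<phi> n))) \<longlonglongrightarrow> 0"
  proof -
    have "(\<lambda>n. 1 / real (Suc n)) \<longlonglongrightarrow> 0" using LIMSEQ_Suc[OF lim_inverse_n'] by simp
    from LIMSEQ_subseq_LIMSEQ[OF this l(2)] show ?thesis by (simp add: o_def)
  qed
  have approx: "(\<lambda>n. w (\<phi> n)) \<longlonglongrightarrow> p'"
    if kw: "(\<lambda>n. kw (\<phi> n)) \<longlonglongrightarrow> p'" and dw: "\<And>n. dist (kw n) (w n) < 1 / (Suc n)" for kw w p'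
  proof -
    have kd: "(\<lambda>n. dist (kw (\<phi> n)) p') \<longlonglongrightarrow> 0"
      using kw by (rule tendsto_dist_iff[THEN iffD1])
    have g: "(\<lambda>n. 1 / real (Suc (\<phi> n)) + dist (kw (\<phi> n)) p') \<longlonglongrightarrow> 0"
      using tendsto_add[OF d0 kd] by simp
    have "(\<lambda>n. dist (w (\<phi> n)) p') \<longlonglongrightarrow> 0"
    proof (rule Lim_null_comparison[OF _ g])
      show "\<forall>\<^sub>F n in sequentially. norm (dist (w (\<phi> n)) p') \<le> 1 / real (Suc (\<phi> n)) + dist (kw (\<phi> n)) p'"
      proof (intro always_eventually allI)
        fix n
        have "dist (w (\<phi> n)) p' \<le> dist (kw (\<phi> n)) (w (\<phi> n)) + dist (kw (\<phi> n)) p'"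
          by (rule dist_triangle3)
        then show "norm (dist (w (\<phi> n)) p') \<le> 1 / real (Suc (\<phi> n)) + dist (kw (\<phi> n)) p'"
          using dw[of "\<phi> n"] by simp
      qed
    qed
    then show ?thesis by (rule tendsto_dist_iff[THEN iffD2])
  qed
  have yl: "(\<lambda>n. y (\<phi> n)) \<longlonglongrightarrow> p" by (rule approx[OF kyl]) (use S in blast)
  have zl: "(\<lambda>n. z (\<phi> n)) \<longlonglongrightarrow> q" by (rule approx[OF kzl]) (use S in blast)
  have iF: "isCont F x" for x using Fc by (simp add: continuous_on_eq_continuous_at)
  have Fy: "(\<lambda>n. F (y (\<phi> n))) \<longlonglongrightarrow> F p" by (rule isCont_tendsto_compose[OF iF yl])
  have Fz: "(\<lambda>n. F (z (\<phi> n))) \<longlonglongrightarrow> F q" by (rule isCont_tendsto_compose[OF iF zl])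
  have "(\<lambda>n. F (y (\<phi> n))) = (\<lambda>n. F (z (\<phi> n)))" using S by auto
  with Fy have "(\<lambda>n. F (z (\<phi> n))) \<longlonglongrightarrow> F p" by simp
  from LIMSEQ_unique[OF this Fz] have "F p = F q" .
  then have pq_eq: "p = q" using injK l(1) pq by (auto simp: inj_on_def)
  obtain r where r: "r > 0" "inj_on F (ball p r)" using loc l(1) pq by auto
  have "\<forall>\<^sub>F n in sequentially. dist (y (\<phi> n)) p < r" using yl r(1) by (rule tendstoD)
  moreover have "\<forall>\<^sub>F n in sequentially. dist (z (\<phi> n)) p < r" using zl r(1) pq_eq by (auto dest: tendstoD)
  ultimately have "\<forall>\<^sub>F n in sequentially. dist (y (\<phi> n)) p < r \<and> dist (z (\<phi> n)) p < r"
    by (rule eventually_conj)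
  then obtain N where "\<forall>n\<ge>N. dist (y (\<phi> n)) p < r \<and> dist (z (\<phi> n)) p < r"
    unfolding eventually_sequentially by blast
  then obtain n where n: "dist (y (\<phi> n)) p < r" "dist (z (\<phi> n)) p < r"
    by blast
  then have "y (\<phi> n) \<in> ball p r" "z (\<phi> n) \<in> ball p r" by (simp_all add: dist_commute)
  then have "y (\<phi> n) = z (\<phi> n)"
    using r(2) S[of "\<phi> n"] unfolding inj_on_def by blast
  then show False using S[of "\<phi> n"] by simp
qed


definition gram :: "'a::real_inner \<Rightarrow> 'a \<Rightarrow> real" where
  "gram p q = inner p p * inner q q - (inner p q)\<^sup>2"

lemma gram_pos:
  fixes p q :: "'a::real_inner"
  assumes ind: "\<And>\<alpha> \<beta>. \<alpha> *\<^sub>R p + \<beta> *\<^sub>R q = 0 \<Longrightarrow> \<alpha> = 0 \<and> \<beta> = 0"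
  shows "gram p q > 0"
proof (rule ccontr)
  assume "\<not> gram p q > 0"
  moreover have "gram p q \<ge> 0" using Cauchy_Schwarz_ineq[of p q] by (simp add: gram_def)
  ultimately have g0: "gram p q = 0" by simp
  have q0: "q \<noteq> 0" using ind[of 0 1] by auto
  define v where "v = inner q q *\<^sub>R p - inner p q *\<^sub>R q"
  have "inner v v = inner q q * gram p q"
    by (simp add: v_def gram_def inner_diff_left inner_diff_right inner_commute algebra_simps power2_eq_square)
  then have "v = 0" using g0 by simp
  then have "inner q q *\<^sub>R p + (- inner p q) *\<^sub>R q = 0" by (simp add: v_def)
  from ind[OF this] have "inner q q = 0" by simp
  with q0 show False by simp
qed

lemma gram_indep:
  fixes p q :: "'a::real_inner"
  assumes g: "gram p q > 0" and eq: "\<alpha> *\<^sub>R p + \<beta> *\<^sub>R q = 0"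
  shows "\<alpha> = 0 \<and> \<beta> = 0"
proof (cases "\<alpha> = 0")
  case True
  then have "\<beta> *\<^sub>R q = 0" using eq by simp
  moreover have "q \<noteq> 0" using g by (auto simp: gram_def)
  ultimately show ?thesis using True by simp
next
  case False
  then have "p = (- \<beta> / \<alpha>) *\<^sub>R q"
  proof -
    have "\<alpha> *\<^sub>R p = - (\<beta> *\<^sub>R q)" using eq by (simp add: eq_neg_iff_add_eq_0)
    then have "p = (1 / \<alpha>) *\<^sub>R (- (\<beta> *\<^sub>R q))" using False
      by (metis divide_self_if scaleR_one scaleR_scaleR times_divide_eq_left mult_1)
    then show ?thesis by simp
  qed
  then have "gram p q = 0" by (simp add: gram_def power2_eq_square algebra_simps)
  with g show ?thesis by simp
qed

lemma compact_in_open_nbhd: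
  fixes K :: "'a::heine_borel set"
  assumes "compact K" "open U" "K \<subseteq> U"
  shows "\<exists>\<delta>>0. {y. \<exists>x\<in>K. dist x y < \<delta>} \<subseteq> U"
proof (cases "K = {} \<or> - U = {}")
  case True
  then show ?thesis by (auto intro!: exI[of _ 1])
next
  case False
  then obtain x y where xy: "x \<in> K" "y \<in> - U" "dist x y = setdist K (- U)"
    using setdist_compact_closed[of K "- U"] assms by auto
  have pos: "setdist K (- U) > 0" using xy assms(3) by (metis ComplD dist_pos_lt subsetD)
  show ?thesis
  proof (intro exI[of _ "setdist K (- U)"] conjI pos subsetI)
    fix z assume "z \<in> {y. \<exists>x\<in>K. dist x y < setdist K (- U)}"
    then obtain x' where "x' \<in> K" "dist x' z < setdist K (- U)" by auto
    then show "z \<in> U" using setdist_le_dist[of x' K z "- U"] by (cases "z \<in> U") auto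
  qed
qed

lemma cis_inj01:
  assumes "t1 \<in> {0..<1}" "t2 \<in> {0..<1}" "cos (2 * pi * t1) = cos (2 * pi * t2)" "sin (2 * pi * t1) = sin (2 * pi * t2)"
  shows "t1 = t2"
proof -
  have main: "False" if lt: "x < y" "x \<in> {0..<1}" "y \<in> {0..<1}"
    "cos (2 * pi * x) = cos (2 * pi * y)" "sin (2 * pi * x) = sin (2 * pi * y)" for x y :: real
  proof -
    have "cos (2 * pi * y - 2 * pi * x) = 1"
      using lt(4,5) by (simp add: cos_diff)
    then obtain n :: int where n: "2 * pi * y - 2 * pi * x = real_of_int n * 2 * pi"
      using cos_one_2pi_int by blast
    then have "2 * pi * (y - x) = 2 * pi * real_of_int n" by (simp add: algebra_simps)
    then have "y - x = n" by simp
    moreover have "0 < y - x" "y - x < 1" using lt by auto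
    ultimately have "0 < real_of_int n" "real_of_int n < 1" by simp_all
    then have "0 < n" "n < 1" by simp_all
    then show False by simp
  qed
  show ?thesis
  proof (rule ccontr)
    assume "t1 \<noteq> t2"
    then consider "t1 < t2" | "t2 < t1" by linarith
    then show False
      by cases (use main assms in metis)+
  qed
qed

lemma cont_fst: "continuous_on UNIV f \<Longrightarrow> continuous_on UNIV (\<lambda>x. f (fst x))"
  by (rule continuous_on_compose2[OF _ continuous_on_fst[OF continuous_on_id]]) auto

lemma Ck_deriv1:
  assumes "Ck_on (Suc k) UNIV f"
  obtains f' where "\<And>t. (f has_vector_derivative f' t) (at t)" "Ck_on k UNIV f'"
  using assms by auto

lemma betD1_pos: "x > 0 \<Longrightarrow> betD 1 x > 0"
  by (simp add: betD_def)

lemma bet_lt1: "bet x < 1"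
  by (simp add: bet_def)

lemma strip_nbhd:
  fixes a b d t \<sigma> \<delta> :: real
  assumes "\<delta> > 0" "3 * d \<le> \<delta>" "t \<in> {a - d..b + d}" "\<bar>\<sigma>\<bar> \<le> d" "a \<le> b"
  shows "(t, \<sigma>) \<in> {y. \<exists>x\<in>{a..b} \<times> {0}. dist x y < \<delta>}"
proof -
  define t' where "t' = max a (min b t)"
  have t'S: "(t', 0) \<in> {a..b} \<times> {0::real}" using assms(5) by (auto simp: t'_def)
  have "\<bar>t' - t\<bar> \<le> d" using assms(3,4,5) by (auto simp: t'_def max_def min_def)
  have "dist (t', 0) (t, \<sigma>) = sqrt ((dist t' t)\<^sup>2 + (dist 0 \<sigma>)\<^sup>2)" by (rule dist_Pair_Pair)
  also have "\<dots> \<le> \<bar>dist t' t\<bar> + \<bar>dist 0 \<sigma>\<bar>" by (rule sqrt_sum_squares_le_sum_abs)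
  also have "\<dots> \<le> 2 * d" using \<open>\<bar>t' - t\<bar> \<le> d\<close> assms(4) by (simp add: dist_real_def)
  also have "\<dots> < \<delta>" using assms(1,2) \<open>\<bar>t' - t\<bar> \<le> d\<close> by linarith
  finally show ?thesis using t'S by blast
qed

lemma main_generic:
  fixes s :: enat and L \<Omega> :: "'a::euclidean_space set"
  assumes s1: "1 \<le> s" and dim: "2 \<le> DIM('a)"
    and arc: "arc_Cs s L" and oO: "open \<Omega>" and LO: "L \<subseteq> \<Omega>"
  shows "\<exists>G. simple_closed_curve_Cs s G \<and> L \<subseteq> G \<and> G \<subseteq> \<Omega>"
proof -
  obtain a b and c :: "real \<Rightarrow> 'a" where ab: "a < b" and cs: "Cs_on s {a..b} c" and ci: "inj_on c {a..b}"
    and cd: "\<forall>t\<in>{a..b}. vector_derivative c (at t within {a..b}) \<noteq> 0" and Ldef: "L = c ` {a..b}"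
    using arc unfolding arc_Cs_def by blast
  let ?S = "{a..b}"
  have ck: "Ck_on k ?S c" if "enat k \<le> s" for k using cs that by (simp add: Cs_on_iff)
  have s1': "enat 1 \<le> s" using s1 by (simp add: one_enat_def)
  obtain D where DS: "\<forall>i. \<forall>t\<in>?S. D i t = ndw ?S i c t"
    and Dk: "\<forall>k. Ck_on k ?S c \<longrightarrow> (\<forall>i<k. \<forall>x. (D i has_vector_derivative D (Suc i) x) (at x)) \<and> continuous_on UNIV (D k)"
    using extension_exists[OF ab, of c] by blast
  define E where "E = D 0"
  have Ek: "Ck_on k UNIV E" if "enat k \<le> s" for k
    unfolding E_def using Dk ck[OF that] by (intro tower_Ck) auto
  have Dk1: "(\<forall>i<1. \<forall>x. (D i has_vector_derivative D (Suc i) x) (at x)) \<and> continuous_on UNIV (D 1)"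
    using Dk ck[OF s1'] by blast
  have dE: "(E has_vector_derivative D 1 x) (at x)" for x
    using Dk1 by (simp add: E_def)
  have cE': "continuous_on UNIV (D 1)" using Dk1 by simp
  have ES: "E t = c t" if "t \<in> ?S" for t using DS that by (simp add: E_def)
  have E'S: "D 1 t = vector_derivative c (at t within ?S)" if "t \<in> ?S" for t
    using DS that by simp
  obtain u :: "real \<Rightarrow> 'a" where us: "\<And>k. Ck_on k UNIV u"
    and uind: "\<And>t \<alpha> \<beta>. t \<in> ?S \<Longrightarrow> \<alpha> *\<^sub>R D 1 t + \<beta> *\<^sub>R u t = 0 \<Longrightarrow> \<alpha> = 0 \<and> \<beta> = 0"
  proof -
    have enz: "D 1 t \<noteq> 0" if "t \<in> ?S" for t using E'S[OF that] cd that by simp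
    have ec: "continuous_on ?S (D 1)" using continuous_on_subset[OF cE'] by blast
    show ?thesis using normal_field[OF ab ec enz dim] that by blast
  qed
  obtain u' where du: "\<And>t. (u has_vector_derivative u' t) (at t)" and u'1: "Ck_on 1 UNIV u'"
    using us[of 2] by (auto simp: numeral_2_eq_2)
  have cu': "continuous_on UNIV u'" using u'1 by (rule Ck_cont)
  have cu: "continuous_on UNIV u" using us[of 0] by simp
  have cE: "continuous_on UNIV E"
    by (rule continuous_on_vector_derivative) (rule has_vector_derivative_at_within[OF dE])
  define F where "F z = E (fst z) + snd z *\<^sub>R u (fst z)" for z :: "real \<times> real"
  have Fc: "continuous_on UNIV F"
    unfolding F_def by (intro continuous_on_add continuous_on_scaleR cont_fst cE cu continuous_on_snd continuous_on_id)
  define K where "K = ?S \<times> {0::real}"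
  have Kc: "compact K" unfolding K_def by (intro compact_Times compact_Icc compact_sing)
  have injK: "inj_on F K"
    using ci unfolding K_def inj_on_def by (auto simp: F_def ES)
  have loc: "\<exists>r>0. inj_on F (ball x r)" if "x \<in> K" for x
  proof -
    define t0 where "t0 = fst x"
    have x: "x = (t0, 0)" "t0 \<in> ?S" using that by (auto simp: K_def t0_def prod_eq_iff)
    obtain r where r: "r > 0" "\<forall>t1 s1 t2 s2. \<bar>t1 - t0\<bar> < r \<and> \<bar>s1\<bar> < r \<and> \<bar>t2 - t0\<bar> < r \<and> \<bar>s2\<bar> < r \<and>
           E t1 + s1 *\<^sub>R u t1 = E t2 + s2 *\<^sub>R u t2 \<longrightarrow> t1 = t2 \<and> s1 = s2"
      using tube_locinj[OF dE cE' du cu' uind[OF x(2)]] by blast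
    have "inj_on F (ball x r)"
    proof (rule inj_onI)
      fix y z assume y: "y \<in> ball x r" and z: "z \<in> ball x r" and eq: "F y = F z"
      have lt: "\<bar>fst y - t0\<bar> < r" "\<bar>snd y\<bar> < r" "\<bar>fst z - t0\<bar> < r" "\<bar>snd z\<bar> < r"
        using y z dist_fst_le[of x y] dist_snd_le[of x y] dist_fst_le[of x z] dist_snd_le[of x z] x
        by (auto simp: dist_real_def abs_minus_commute)
      have eqF: "E (fst y) + snd y *\<^sub>R u (fst y) = E (fst z) + snd z *\<^sub>R u (fst z)"
        using eq by (simp add: F_def)
      have H: "\<bar>fst y - t0\<bar> < r \<and> \<bar>snd y\<bar> < r \<and> \<bar>fst z - t0\<bar> < r \<and> \<bar>snd z\<bar> < r \<and>
           E (fst y) + snd y *\<^sub>R u (fst y) = E (fst z) + snd z *\<^sub>R u (fst z)"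
        using lt eqF by simp
      have "fst y = fst z \<and> snd y = snd z"
        by (rule mp[OF r(2)[THEN spec, THEN spec, THEN spec, THEN spec] H])
      then show "y = z" by (simp add: prod_eq_iff)
    qed
    then show ?thesis using r(1) by blast
  qed
  obtain \<delta>1 where \<delta>1: "\<delta>1 > 0" "inj_on F {y. \<exists>x\<in>K. dist x y < \<delta>1}"
    using inj_nbhd_compact[OF Kc Fc injK loc] by blast
  define GS where "GS = {z. 0 < gram (D 1 (fst z) + snd z *\<^sub>R u' (fst z)) (u (fst z))}"
  have oGS: "open GS"
    unfolding GS_def gram_def
    by (intro open_Collect_less continuous_intros cont_fst cE' cu' cu continuous_on_snd continuous_on_id)
  have KGS: "K \<subseteq> GS"
    using uind by (auto simp: K_def GS_def intro!: gram_pos)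
  obtain \<delta>2 where \<delta>2: "\<delta>2 > 0" "{y. \<exists>x\<in>K. dist x y < \<delta>2} \<subseteq> GS"
    using compact_in_open_nbhd[OF Kc oGS KGS] by blast
  have oFO: "open (F -` \<Omega>)" using oO Fc by (rule open_vimage)
  have KFO: "K \<subseteq> F -` \<Omega>" using LO by (auto simp: K_def F_def ES Ldef)
  obtain \<delta>3 where \<delta>3: "\<delta>3 > 0" "{y. \<exists>x\<in>K. dist x y < \<delta>3} \<subseteq> F -` \<Omega>"
    using compact_in_open_nbhd[OF Kc oFO KFO] by blast
  define d where "d = min (min \<delta>1 \<delta>2) \<delta>3 / 3"
  have dpos: "d > 0" using \<delta>1 \<delta>2 \<delta>3 by (simp add: d_def)
  have strip: "(t, \<sigma>) \<in> {y. \<exists>x\<in>K. dist x y < \<delta>1} \<and> (t, \<sigma>) \<in> GS \<and> F (t, \<sigma>) \<in> \<Omega>"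
    if "t \<in> {a - d..b + d}" "\<bar>\<sigma>\<bar> \<le> d" for t \<sigma>
  proof -
    have "(t, \<sigma>) \<in> {y. \<exists>x\<in>K. dist x y < \<delta>1}"
      unfolding K_def by (rule strip_nbhd) (use \<delta>1 that ab in \<open>auto simp: d_def\<close>)
    moreover have "(t, \<sigma>) \<in> {y. \<exists>x\<in>K. dist x y < \<delta>2}"
      unfolding K_def by (rule strip_nbhd) (use \<delta>2 that ab in \<open>auto simp: d_def\<close>)
    moreover have "(t, \<sigma>) \<in> {y. \<exists>x\<in>K. dist x y < \<delta>3}"
      unfolding K_def by (rule strip_nbhd) (use \<delta>3 that ab in \<open>auto simp: d_def\<close>)
    ultimately show ?thesis using \<delta>2(2) \<delta>3(2) by blast
  qed
  define m where "m = (a + b) / 2"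
  define h where "h = (b - a) / 2"
  define R where "R = h + d / 2"
  define \<kappa> where "\<kappa> = sqrt (1 - (h / R)\<^sup>2)"
  have hpos: "h > 0" using ab by (simp add: h_def)
  have Rpos: "R > 0" using hpos dpos by (simp add: R_def)
  have hR: "0 < h / R" "h / R < 1" using hpos dpos Rpos by (auto simp: R_def field_simps)
  have hR2: "(h / R)\<^sup>2 < 1" using hR by (simp add: power_less_one_iff abs_less_iff)
  have kpos: "\<kappa> > 0" using hR2 by (simp add: \<kappa>_def)
  have k2: "\<kappa>\<^sup>2 = 1 - (h / R)\<^sup>2" using hR2 by (simp add: \<kappa>_def)
  define l1 where "l1 \<theta> = m + R * cos (2 * pi * \<theta>)" for \<theta>
  define l2 where "l2 \<theta> = d * bet (sin (2 * pi * \<theta>) + \<kappa>)" for \<theta>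
  define g where "g \<theta> = E (l1 \<theta>) + l2 \<theta> *\<^sub>R u (l1 \<theta>)" for \<theta>
  have gF: "g \<theta> = F (l1 \<theta>, l2 \<theta>)" for \<theta> by (simp add: g_def F_def)
  have l1S: "l1 \<theta> \<in> {a - d..b + d}" for \<theta>
  proof -
    have "\<bar>R * cos (2 * pi * \<theta>)\<bar> \<le> R" using Rpos by (simp add: abs_mult)
    then have X: "- R \<le> R * cos (2 * pi * \<theta>)" "R * cos (2 * pi * \<theta>) \<le> R" by (simp_all add: abs_le_iff)
    have mR: "m - R = a - d / 2" "m + R = b + d / 2" by (simp_all add: m_def R_def h_def field_simps)
    have "a - d \<le> m + R * cos (2 * pi * \<theta>)" "m + R * cos (2 * pi * \<theta>) \<le> b + d"
      using X mR dpos by linarith+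
    then show ?thesis by (simp add: l1_def)
  qed
  have l2S: "\<bar>l2 \<theta>\<bar> \<le> d" for \<theta>
    using dpos bet_nonneg[of "sin (2 * pi * \<theta>) + \<kappa>"] bet_lt1[of "sin (2 * pi * \<theta>) + \<kappa>"]
    by (simp add: l2_def abs_mult)
  note stripg = strip[OF l1S l2S]
  have gk: "Ck_on k UNIV g" if "enat k \<le> s" for k
  proof -
    have l1k: "Ck_on k UNIV l1"
      unfolding l1_def[abs_def] by (intro Ck_add Ck_mult Ck_const cos_smooth)
    have l2k: "Ck_on k UNIV l2"
      unfolding l2_def[abs_def] by (intro Ck_mult Ck_const Ck_comp[OF bet_smooth] Ck_add sin_smooth)
    show ?thesis
      unfolding g_def[abs_def]
      by (intro Ck_add Ck_scaleR Ck_comp[OF Ek[OF that]] Ck_comp[OF us] l1k l2k)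
  qed
  have gCs: "Cs_on s UNIV g" using gk by (simp add: Cs_on_iff)
  have gper: "g (\<theta> + 1) = g \<theta>" for \<theta>
  proof -
    have "2 * pi * (\<theta> + 1) = 2 * pi * \<theta> + 2 * pi" by (simp add: algebra_simps)
    then show ?thesis by (simp add: g_def l1_def l2_def)
  qed
  have ginj: "inj_on g {0..<1}"
  proof (rule inj_onI)
    fix x y assume x: "x \<in> {0..<1}" and y: "y \<in> {0..<1}" and eq: "g x = g y"
    have "(l1 x, l2 x) = (l1 y, l2 y)"
      using \<delta>1(2) stripg[of x] stripg[of y] eq unfolding gF inj_on_def by blast
    then have c: "cos (2 * pi * x) = cos (2 * pi * y)" and bb: "bet (sin (2 * pi * x) + \<kappa>) = bet (sin (2 * pi * y) + \<kappa>)"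
      using Rpos dpos by (auto simp: l1_def l2_def)
    have sq: "(sin (2 * pi * x))\<^sup>2 = (sin (2 * pi * y))\<^sup>2"
      using c by (simp add: sin_squared_eq)
    have "sin (2 * pi * x) = sin (2 * pi * y)"
    proof (rule ccontr)
      assume ne: "sin (2 * pi * x) \<noteq> sin (2 * pi * y)"
      then have neg: "sin (2 * pi * y) = - sin (2 * pi * x)"
        using sq by (metis power2_eq_iff)
      have "sin (2 * pi * x) + \<kappa> \<le> 0 \<and> sin (2 * pi * y) + \<kappa> \<le> 0"
      proof (rule ccontr)
        assume "\<not> ?thesis"
        then consider "sin (2 * pi * x) + \<kappa> > 0" | "sin (2 * pi * y) + \<kappa> > 0" by linarith
        then show False
        proof cases
          case 1
          show False
          proof (cases "sin (2 * pi * y) + \<kappa> \<le> 0")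
            case True then show False using bb bet_nonpos[OF True] bet_pos[OF 1] by simp
          next
            case False
            then show False using bb ne bet_strict_mono[of "sin (2 * pi * x) + \<kappa>" "sin (2 * pi * y) + \<kappa>"]
              bet_strict_mono[of "sin (2 * pi * y) + \<kappa>" "sin (2 * pi * x) + \<kappa>"] 1
              by (cases "sin (2 * pi * x) < sin (2 * pi * y)") auto
          qed
        next
          case 2
          show False
          proof (cases "sin (2 * pi * x) + \<kappa> \<le> 0")
            case True then show False using bb bet_nonpos[OF True] bet_pos[OF 2] by simp
          next
            case False
            then show False using bb ne bet_strict_mono[of "sin (2 * pi * x) + \<kappa>" "sin (2 * pi * y) + \<kappa>"]
              bet_strict_mono[of "sin (2 * pi * y) + \<kappa>" "sin (2 * pi * x) + \<kappa>"] 2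
              by (cases "sin (2 * pi * x) < sin (2 * pi * y)") auto
          qed
        qed
      qed
      then show False using neg kpos by linarith
    qed
    then show "x = y" using cis_inj01[OF x y c] by blast
  qed
  have gder: "vector_derivative g (at \<theta>) \<noteq> 0" for \<theta>
  proof -
    define l1' where "l1' = - (R * (2 * pi) * sin (2 * pi * \<theta>))"
    define l2' where "l2' = d * (betD 1 (sin (2 * pi * \<theta>) + \<kappa>) * (2 * pi * cos (2 * pi * \<theta>)))"
    have d1: "(l1 has_real_derivative l1') (at \<theta>)"
      unfolding l1_def[abs_def] l1'_def by (auto intro!: derivative_eq_intros)
    have bd: "(bet has_real_derivative betD 1 x) (at x)" for x
      using betD_deriv[of 0 x] by (simp add: betD_0)
    have ds: "((\<lambda>\<theta>. sin (2 * pi * \<theta>) + \<kappa>) has_real_derivative 2 * pi * cos (2 * pi * \<theta>)) (at \<theta>)"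
      by (auto intro!: derivative_eq_intros)
    have d2: "(l2 has_real_derivative l2') (at \<theta>)"
      unfolding l2_def[abs_def] l2'_def
      by (intro DERIV_cmult DERIV_chain2[OF bd ds])
    have dEl: "((E \<circ> l1) has_vector_derivative l1' *\<^sub>R D 1 (l1 \<theta>)) (at \<theta>)"
      by (rule vector_diff_chain_at[OF d1[unfolded has_real_derivative_iff_has_vector_derivative] dE])
    have dul: "((u \<circ> l1) has_vector_derivative l1' *\<^sub>R u' (l1 \<theta>)) (at \<theta>)"
      by (rule vector_diff_chain_at[OF d1[unfolded has_real_derivative_iff_has_vector_derivative] du])
    have "(g has_vector_derivative l1' *\<^sub>R D 1 (l1 \<theta>) + (l2 \<theta> *\<^sub>R (l1' *\<^sub>R u' (l1 \<theta>)) + l2' *\<^sub>R u (l1 \<theta>))) (at \<theta>)"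
      unfolding g_def[abs_def]
      using has_vector_derivative_add[OF dEl has_vector_derivative_scaleR[OF d2 dul]] by (simp add: o_def)
    then have "vector_derivative g (at \<theta>) = l1' *\<^sub>R (D 1 (l1 \<theta>) + l2 \<theta> *\<^sub>R u' (l1 \<theta>)) + l2' *\<^sub>R u (l1 \<theta>)"
      by (simp add: vector_derivative_at scaleR_add_right)
    moreover have "l1' *\<^sub>R (D 1 (l1 \<theta>) + l2 \<theta> *\<^sub>R u' (l1 \<theta>)) + l2' *\<^sub>R u (l1 \<theta>) \<noteq> 0"
    proof
      assume z: "l1' *\<^sub>R (D 1 (l1 \<theta>) + l2 \<theta> *\<^sub>R u' (l1 \<theta>)) + l2' *\<^sub>R u (l1 \<theta>) = 0"
      have "gram (D 1 (l1 \<theta>) + l2 \<theta> *\<^sub>R u' (l1 \<theta>)) (u (l1 \<theta>)) > 0"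
        using stripg[of \<theta>] by (simp add: GS_def)
      from gram_indep[OF this z] have z1: "l1' = 0" and z2: "l2' = 0" by auto
      from z1 have s0: "sin (2 * pi * \<theta>) = 0" using Rpos by (simp add: l1'_def)
      then have "(cos (2 * pi * \<theta>))\<^sup>2 = 1" using sin_cos_squared_add[of "2 * pi * \<theta>"] by simp
      then have "cos (2 * pi * \<theta>) \<noteq> 0" by auto
      moreover have "betD 1 \<kappa> > 0" using kpos by (rule betD1_pos)
      ultimately have "l2' \<noteq> 0" using dpos s0 by (simp add: l2'_def)
      with z2 show False by simp
    qed
    ultimately show ?thesis by simp
  qed
  have LG: "L \<subseteq> g ` {0..1}"
  proof
    fix p assume "p \<in> L"
    then obtain t where t: "t \<in> ?S" "p = c t" using Ldef by auto
    define c0 where "c0 = (t - m) / R"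
    have c0b: "\<bar>c0\<bar> \<le> h / R" using t Rpos by (auto simp: c0_def m_def h_def abs_le_iff field_simps)
    then have c01: "-1 \<le> c0" "c0 \<le> 1" using hR by auto
    define \<phi> where "\<phi> = arccos c0"
    have \<phi>b: "0 \<le> \<phi>" "\<phi> \<le> pi" using arccos_bounded[OF c01] by (auto simp: \<phi>_def)
    define \<theta> where "\<theta> = 1 - \<phi> / (2 * pi)"
    have \<theta>I: "\<theta> \<in> {0..1}" using \<phi>b by (auto simp: \<theta>_def field_simps)
    have arg: "2 * pi * \<theta> = 2 * pi - \<phi>" by (simp add: \<theta>_def field_simps)
    have cth: "cos (2 * pi * \<theta>) = c0" using c01 by (simp add: arg \<phi>_def)
    have sth: "sin (2 * pi * \<theta>) = - sqrt (1 - c0\<^sup>2)" using c01 by (simp add: arg \<phi>_def sin_arccos)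
    have "c0\<^sup>2 \<le> (h / R)\<^sup>2" using c0b by (metis abs_ge_zero power2_abs power_mono)
    then have "\<kappa>\<^sup>2 \<le> 1 - c0\<^sup>2" using k2 by simp
    then have "\<kappa> \<le> sqrt (1 - c0\<^sup>2)" using kpos by (metis real_le_rsqrt)
    then have "l2 \<theta> = 0" by (simp add: l2_def sth bet_nonpos)
    moreover have "l1 \<theta> = t" using Rpos by (simp add: l1_def cth c0_def)
    ultimately have "g \<theta> = c t" by (simp add: g_def ES[OF t(1)])
    then have "p = g \<theta>" using t(2) by simp
    then show "p \<in> g ` {0..1}" by (rule image_eqI[OF _ \<theta>I])
  qed
  have GO: "g ` {0..1} \<subseteq> \<Omega>" using stripg by (auto simp: gF)
  have "simple_closed_curve_Cs s (g ` {0..1})"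
    unfolding simple_closed_curve_Cs_def using gCs gper ginj gder by blast
  then show ?thesis using LG GO by blast
qed

theorem lemma6p4:
  fixes s :: enat and L :: "(real ^ 'n) set" and \<Omega> :: "(real ^ 'n) set"
  assumes "1 \<le> s" and "CARD('n) \<ge> 2"
    and "arc_Cs s L" and "open \<Omega>" and "L \<subseteq> \<Omega>"
  shows "\<exists>G. simple_closed_curve_Cs s G \<and> L \<subseteq> G \<and> G \<subseteq> \<Omega>"
proof -
  have "2 \<le> DIM(real ^ 'n)" using assms(2) by simp
  then show ?thesis using main_generic[OF assms(1) _ assms(3,4,5)] by blast
qed

end
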